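(* Let $R$ be a finitely generated algebra over an algebraically closed field, and let $S$ be a nonzero $R$-algebra that is free as an $R$-module. Suppose that $S/\mathfrak{m}S$ is a domain for every maximal ideal $\mathfrak{m}$ of $R$. Then $R \to S$ has the stable prime extension property.
   Context: All rings are commutative with identity. $R \to S$ has the prime extension property if for every prime ideal $P$ of $R$, $PS$ is prime in $S$ or $PS = S$; it has the stable prime extension property if for every $n \ge 0$, $R[X_1,\dots,X_n] \to S[X_1,\dots,X_n]$ has the prime extension property. *)

theory Defs
  imports Main "HOL-Library.Poly_Mapping" "HOL-Computational_Algebra.Polynomial"
begin

definition is_ring_hom :: "('a::comm_ring_1 \<Rightarrow> 'b::comm_ring_1) \<Rightarrow> bool" where
  "is_ring_hom h \<longleftrightarrow> h 1 = 1 \<and> (\<forall>x y. h (x + y) = h x + h y) \<and> (\<forall>x y. h (x * y) = h x * h y)"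

definition alg_closed_field :: "'k::field itself \<Rightarrow> bool" where
  "alg_closed_field _ \<longleftrightarrow> (\<forall>p :: 'k poly. 0 < degree p \<longrightarrow> (\<exists>x. poly p x = 0))"

inductive_set gen_subring :: "'a::comm_ring_1 set \<Rightarrow> 'a set" for X where
  base: "x \<in> X \<Longrightarrow> x \<in> gen_subring X"
| one: "1 \<in> gen_subring X"
| add: "x \<in> gen_subring X \<Longrightarrow> y \<in> gen_subring X \<Longrightarrow> x + y \<in> gen_subring X"
| neg: "x \<in> gen_subring X \<Longrightarrow> - x \<in> gen_subring X"
| mult: "x \<in> gen_subring X \<Longrightarrow> y \<in> gen_subring X \<Longrightarrow> x * y \<in> gen_subring X"

definition finitely_generated_algebra :: "('k::field \<Rightarrow> 'r::comm_ring_1) \<Rightarrow> bool" where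
  "finitely_generated_algebra phi \<longleftrightarrow>
     (\<exists>G. finite G \<and> gen_subring (range phi \<union> G) = UNIV)"

definition free_module_via :: "('r::comm_ring_1 \<Rightarrow> 's::comm_ring_1) \<Rightarrow> bool" where
  "free_module_via f \<longleftrightarrow> (\<exists>B. \<forall>s. \<exists>!c :: 's \<Rightarrow> 'r.
      (\<forall>b. b \<notin> B \<longrightarrow> c b = 0) \<and> finite {b. c b \<noteq> 0} \<and>
      s = (\<Sum>b\<in>{b. c b \<noteq> 0}. f (c b) * b))"

(* ideals of a ring whose carrier is the subring A of an ambient commutative ring *)
definition ideal_in :: "'a::comm_ring_1 set \<Rightarrow> 'a set \<Rightarrow> bool" where
  "ideal_in A I \<longleftrightarrow> I \<subseteq> A \<and> 0 \<in> I \<and> (\<forall>x\<in>I. \<forall>y\<in>I. x + y \<in> I) \<and> (\<forall>a\<in>A. \<forall>x\<in>I. a * x \<in> I)"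

definition prime_ideal_in :: "'a::comm_ring_1 set \<Rightarrow> 'a set \<Rightarrow> bool" where
  "prime_ideal_in A P \<longleftrightarrow> ideal_in A P \<and> P \<noteq> A \<and>
     (\<forall>a\<in>A. \<forall>b\<in>A. a * b \<in> P \<longrightarrow> a \<in> P \<or> b \<in> P)"

definition maximal_ideal_in :: "'a::comm_ring_1 set \<Rightarrow> 'a set \<Rightarrow> bool" where
  "maximal_ideal_in A M \<longleftrightarrow> ideal_in A M \<and> M \<noteq> A \<and>
     (\<forall>J. ideal_in A J \<and> M \<subseteq> J \<longrightarrow> J = M \<or> J = A)"

definition ideal_gen_in :: "'a::comm_ring_1 set \<Rightarrow> 'a set \<Rightarrow> 'a set" where
  "ideal_gen_in A X = A \<inter> \<Inter>{I. ideal_in A I \<and> X \<subseteq> I}"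

definition quotient_is_domain :: "'a::comm_ring_1 set \<Rightarrow> 'a set \<Rightarrow> bool" where
  "quotient_is_domain A I \<longleftrightarrow> I \<noteq> A \<and> (\<forall>a\<in>A. \<forall>b\<in>A. a * b \<in> I \<longrightarrow> a \<in> I \<or> b \<in> I)"

definition prime_extension_property :: "'a::comm_ring_1 set \<Rightarrow> 'b::comm_ring_1 set \<Rightarrow> ('a \<Rightarrow> 'b) \<Rightarrow> bool" where
  "prime_extension_property A B h \<longleftrightarrow>
     (\<forall>P. prime_ideal_in A P \<longrightarrow>
        prime_ideal_in B (ideal_gen_in B (h ` P)) \<or> ideal_gen_in B (h ` P) = B)"

(* R[X_0,...,X_{n-1}] inside the polynomial ring in countably many variables:
   polynomials all of whose monomials only involve variables with index < n *)
definition polys_in :: "nat \<Rightarrow> ((nat \<Rightarrow>\<^sub>0 nat) \<Rightarrow>\<^sub>0 'a::comm_ring_1) set" where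
  "polys_in n = {p. \<forall>m\<in>Poly_Mapping.keys p. \<forall>i\<in>Poly_Mapping.keys (m :: nat \<Rightarrow>\<^sub>0 nat). i < n}"

definition stable_prime_extension_property :: "('r::comm_ring_1 \<Rightarrow> 's::comm_ring_1) \<Rightarrow> bool" where
  "stable_prime_extension_property f \<longleftrightarrow>
     (\<forall>n. prime_extension_property (polys_in n) (polys_in n) (Poly_Mapping.map f))"

end

theory Submission
  imports Defs "Jordan_Normal_Form.Char_Poly"
begin


section \<open>Subrings and partial homomorphisms\<close>

definition subr :: "'a::comm_ring_1 set \<Rightarrow> bool" where
  "subr A \<longleftrightarrow> 1 \<in> A \<and> (\<forall>x\<in>A. \<forall>y\<in>A. x + y \<in> A) \<and> (\<forall>x\<in>A. \<forall>y\<in>A. x * y \<in> A) \<and> (\<forall>x\<in>A. - x \<in> A)"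

lemma subrD:
  assumes "subr A"
  shows "1 \<in> A" "0 \<in> A" "x \<in> A \<Longrightarrow> y \<in> A \<Longrightarrow> x + y \<in> A" "x \<in> A \<Longrightarrow> y \<in> A \<Longrightarrow> x * y \<in> A"
    "x \<in> A \<Longrightarrow> - x \<in> A" "x \<in> A \<Longrightarrow> y \<in> A \<Longrightarrow> x - y \<in> A"
proof -
  show 1: "1 \<in> A" using assms unfolding subr_def by auto
  have "-1 \<in> A" using assms 1 unfolding subr_def by auto
  then have "1 + -1 \<in> A" using assms 1 unfolding subr_def by blast
  then show "0 \<in> A" by simp
  show "x \<in> A \<Longrightarrow> y \<in> A \<Longrightarrow> x + y \<in> A" "x \<in> A \<Longrightarrow> y \<in> A \<Longrightarrow> x * y \<in> A"
    "x \<in> A \<Longrightarrow> - x \<in> A" using assms unfolding subr_def by auto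
  show "x \<in> A \<Longrightarrow> y \<in> A \<Longrightarrow> x - y \<in> A" using assms unfolding subr_def
    by (metis diff_conv_add_uminus)
qed

lemma subr_sum: "subr A \<Longrightarrow> (\<And>i. i \<in> F \<Longrightarrow> g i \<in> A) \<Longrightarrow> sum g F \<in> A"
  by (induction F rule: infinite_finite_induct) (auto simp: subrD)

lemma subr_prod: "subr A \<Longrightarrow> (\<And>i. i \<in> F \<Longrightarrow> g i \<in> A) \<Longrightarrow> prod g F \<in> A"
  by (induction F rule: infinite_finite_induct) (auto simp: subrD)

lemma subr_power: "subr A \<Longrightarrow> x \<in> A \<Longrightarrow> x ^ n \<in> A"
  by (induction n) (auto simp: subrD)

lemma subr_gen_subring: "subr (gen_subring X)"
  unfolding subr_def by (auto intro: gen_subring.intros)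

lemma gen_subring_base: "X \<subseteq> gen_subring X"
  by (auto intro: gen_subring.base)

lemma gen_subring_least: "subr A \<Longrightarrow> X \<subseteq> A \<Longrightarrow> gen_subring X \<subseteq> A"
proof
  fix x assume a: "subr A" "X \<subseteq> A" and x: "x \<in> gen_subring X"
  from x show "x \<in> A" by (induction rule: gen_subring.induct) (use a in \<open>auto simp: subrD\<close>)
qed

lemma gen_subring_mono: "X \<subseteq> Y \<Longrightarrow> gen_subring X \<subseteq> gen_subring Y"
  by (meson gen_subring_base gen_subring_least order_trans subr_gen_subring)

definition hom_on :: "'a::comm_ring_1 set \<Rightarrow> ('a \<Rightarrow> 'b::comm_ring_1) \<Rightarrow> bool" where
  "hom_on A \<chi> \<longleftrightarrow> \<chi> 1 = 1 \<and> (\<forall>x\<in>A. \<forall>y\<in>A. \<chi> (x + y) = \<chi> x + \<chi> y \<and> \<chi> (x * y) = \<chi> x * \<chi> y)"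

lemma hom_onD:
  assumes "hom_on A \<chi>" "subr A"
  shows "\<chi> 1 = 1" "\<chi> 0 = 0" "x \<in> A \<Longrightarrow> y \<in> A \<Longrightarrow> \<chi> (x + y) = \<chi> x + \<chi> y"
    "x \<in> A \<Longrightarrow> y \<in> A \<Longrightarrow> \<chi> (x * y) = \<chi> x * \<chi> y"
    "x \<in> A \<Longrightarrow> \<chi> (- x) = - \<chi> x" "x \<in> A \<Longrightarrow> y \<in> A \<Longrightarrow> \<chi> (x - y) = \<chi> x - \<chi> y"
proof -
  have a: "\<And>x y. x \<in> A \<Longrightarrow> y \<in> A \<Longrightarrow> \<chi> (x + y) = \<chi> x + \<chi> y"
    "\<And>x y. x \<in> A \<Longrightarrow> y \<in> A \<Longrightarrow> \<chi> (x * y) = \<chi> x * \<chi> y" using assms unfolding hom_on_def by auto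
  show "\<chi> 1 = 1" using assms unfolding hom_on_def by auto
  have 0: "0 \<in> A" using assms(2) by (simp add: subrD)
  have "\<chi> (0 + 0) = \<chi> 0 + \<chi> 0" using a 0 by blast
  then show z: "\<chi> 0 = 0" by simp
  have n: "\<And>x. x \<in> A \<Longrightarrow> \<chi> (- x) = - \<chi> x"
  proof -
    fix x assume x: "x \<in> A"
    then have "-x \<in> A" using assms(2) by (simp add: subrD)
    then have "\<chi> (x + - x) = \<chi> x + \<chi> (-x)" by (rule a(1)[OF x])
    then show "\<chi> (- x) = - \<chi> x" using z by (simp add: eq_neg_iff_add_eq_0 add.commute)
  qed
  show "x \<in> A \<Longrightarrow> y \<in> A \<Longrightarrow> \<chi> (x + y) = \<chi> x + \<chi> y"
    "x \<in> A \<Longrightarrow> y \<in> A \<Longrightarrow> \<chi> (x * y) = \<chi> x * \<chi> y" "x \<in> A \<Longrightarrow> \<chi> (- x) = - \<chi> x"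
    using a n by auto
  show "x \<in> A \<Longrightarrow> y \<in> A \<Longrightarrow> \<chi> (x - y) = \<chi> x - \<chi> y"
    using a(1)[of x "-y"] n[of y] assms(2) by (simp add: subrD)
qed

lemma hom_on_sum: "hom_on A \<chi> \<Longrightarrow> subr A \<Longrightarrow> (\<And>i. i \<in> F \<Longrightarrow> g i \<in> A) \<Longrightarrow> \<chi> (sum g F) = (\<Sum>i\<in>F. \<chi> (g i))"
  by (induction F rule: infinite_finite_induct) (auto simp: hom_onD subr_sum)

lemma hom_on_prod: "hom_on A \<chi> \<Longrightarrow> subr A \<Longrightarrow> (\<And>i. i \<in> F \<Longrightarrow> g i \<in> A) \<Longrightarrow> \<chi> (prod g F) = (\<Prod>i\<in>F. \<chi> (g i))"
  by (induction F rule: infinite_finite_induct) (auto simp: hom_onD subr_prod)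

lemma hom_on_power: "hom_on A \<chi> \<Longrightarrow> subr A \<Longrightarrow> x \<in> A \<Longrightarrow> \<chi> (x ^ n) = \<chi> x ^ n"
  by (induction n) (auto simp: hom_onD subr_power)

lemma ring_homD:
  assumes "is_ring_hom h"
  shows "h 1 = 1" "h 0 = 0" "h (x + y) = h x + h y" "h (x * y) = h x * h y" "h (- x) = - h x"
    "h (x - y) = h x - h y" "h (x ^ n) = h x ^ n" "h (sum g F) = (\<Sum>i\<in>F. h (g i))"
    "h (prod g F) = (\<Prod>i\<in>F. h (g i))"
proof -
  have hom: "hom_on UNIV h" using assms unfolding is_ring_hom_def hom_on_def by auto
  have s: "subr (UNIV::'a set)" unfolding subr_def by auto
  show "h 1 = 1" "h 0 = 0" "h (x + y) = h x + h y" "h (x * y) = h x * h y" "h (- x) = - h x"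
    "h (x - y) = h x - h y" using hom_onD[OF hom s] by auto
  show "h (x ^ n) = h x ^ n" using hom_on_power[OF hom s] by auto
  show "h (sum g F) = (\<Sum>i\<in>F. h (g i))" using hom_on_sum[OF hom s] by auto
  show "h (prod g F) = (\<Prod>i\<in>F. h (g i))" using hom_on_prod[OF hom s] by auto
qed


lemma ideal_inD:
  assumes "ideal_in A I" "subr A"
  shows "I \<subseteq> A" "0 \<in> I" "x \<in> I \<Longrightarrow> y \<in> I \<Longrightarrow> x + y \<in> I" "a \<in> A \<Longrightarrow> x \<in> I \<Longrightarrow> a * x \<in> I"
    "a \<in> A \<Longrightarrow> x \<in> I \<Longrightarrow> x * a \<in> I" "x \<in> I \<Longrightarrow> - x \<in> I" "x \<in> I \<Longrightarrow> y \<in> I \<Longrightarrow> x - y \<in> I"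
proof -
  have m: "\<And>a x. a \<in> A \<Longrightarrow> x \<in> I \<Longrightarrow> a * x \<in> I" using assms(1) unfolding ideal_in_def by auto
  have n: "\<And>x. x \<in> I \<Longrightarrow> - x \<in> I" using m[of "-1"] assms(2) by (auto simp: subrD)
  show "I \<subseteq> A" "0 \<in> I" "x \<in> I \<Longrightarrow> y \<in> I \<Longrightarrow> x + y \<in> I" "a \<in> A \<Longrightarrow> x \<in> I \<Longrightarrow> a * x \<in> I"
    "a \<in> A \<Longrightarrow> x \<in> I \<Longrightarrow> x * a \<in> I" "x \<in> I \<Longrightarrow> - x \<in> I"
    using assms(1) m n unfolding ideal_in_def by (auto simp: mult.commute)
  show "x \<in> I \<Longrightarrow> y \<in> I \<Longrightarrow> x - y \<in> I" using n[of y] assms(1) unfolding ideal_in_def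
    by (metis diff_conv_add_uminus)
qed

lemma ideal_in_sum: "ideal_in A I \<Longrightarrow> subr A \<Longrightarrow> (\<And>i. i \<in> F \<Longrightarrow> g i \<in> I) \<Longrightarrow> sum g F \<in> I"
  by (induction F rule: infinite_finite_induct) (auto simp: ideal_inD)

lemma ideal_gen_ideal: assumes "subr A" "X \<subseteq> A" shows "ideal_in A (ideal_gen_in A X)"
  unfolding ideal_in_def ideal_gen_in_def using assms
  by (auto simp: subrD ideal_inD)

lemma ideal_gen_base: "X \<subseteq> A \<Longrightarrow> X \<subseteq> ideal_gen_in A X"
  unfolding ideal_gen_in_def by auto

lemma ideal_gen_least: "ideal_in A I \<Longrightarrow> X \<subseteq> I \<Longrightarrow> ideal_gen_in A X \<subseteq> I"
  unfolding ideal_gen_in_def by auto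

lemma prime_idealD:
  assumes "prime_ideal_in A P"
  shows "ideal_in A P" "1 \<notin> P" "a \<in> A \<Longrightarrow> b \<in> A \<Longrightarrow> a * b \<in> P \<Longrightarrow> a \<in> P \<or> b \<in> P"
    "subr A \<Longrightarrow> a \<in> A \<Longrightarrow> b \<in> A \<Longrightarrow> a \<notin> P \<Longrightarrow> b \<notin> P \<Longrightarrow> a * b \<notin> P"
proof -
  show i: "ideal_in A P" using assms unfolding prime_ideal_in_def by auto
  show "a \<in> A \<Longrightarrow> b \<in> A \<Longrightarrow> a * b \<in> P \<Longrightarrow> a \<in> P \<or> b \<in> P"
    "subr A \<Longrightarrow> a \<in> A \<Longrightarrow> b \<in> A \<Longrightarrow> a \<notin> P \<Longrightarrow> b \<notin> P \<Longrightarrow> a * b \<notin> P"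
    using assms unfolding prime_ideal_in_def by auto
  show "1 \<notin> P"
  proof
    assume "1 \<in> P"
    then have "\<forall>a\<in>A. a * 1 \<in> P" using i unfolding ideal_in_def by blast
    then have "A \<subseteq> P" by auto
    then show False using assms i unfolding prime_ideal_in_def ideal_in_def by auto
  qed
qed

section \<open>Multivariate polynomials\<close>

abbreviation Xv :: "nat \<Rightarrow> (nat \<Rightarrow>\<^sub>0 nat) \<Rightarrow>\<^sub>0 'a::comm_ring_1" where
  "Xv i \<equiv> Poly_Mapping.single (Poly_Mapping.single i 1) 1"

lemma keys_add_nat: "Poly_Mapping.keys ((a::nat \<Rightarrow>\<^sub>0 nat) + b) = Poly_Mapping.keys a \<union> Poly_Mapping.keys b"
  by (auto simp: in_keys_iff lookup_add)

lemma subr_polys_in: "subr (polys_in n :: ((nat \<Rightarrow>\<^sub>0 nat) \<Rightarrow>\<^sub>0 'a::comm_ring_1) set)"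
proof -
  have add: "p + q \<in> polys_in n" if "p \<in> polys_in n" "q \<in> polys_in n" for p q :: "(nat \<Rightarrow>\<^sub>0 nat) \<Rightarrow>\<^sub>0 'a"
    using that keys_add[of p q] unfolding polys_in_def by blast
  have mult: "p * q \<in> polys_in n" if "p \<in> polys_in n" "q \<in> polys_in n" for p q :: "(nat \<Rightarrow>\<^sub>0 nat) \<Rightarrow>\<^sub>0 'a"
  proof -
    have "\<forall>m\<in>Poly_Mapping.keys (p * q). \<forall>i\<in>Poly_Mapping.keys m. i < n"
    proof (intro ballI)
      fix m i assume m: "m \<in> Poly_Mapping.keys (p * q)" and i: "i \<in> Poly_Mapping.keys m"
      from keys_mult[of p q] m obtain a b where "m = a + b" "a \<in> Poly_Mapping.keys p" "b \<in> Poly_Mapping.keys q" by blast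
      then show "i < n" using i that keys_add_nat[of a b] unfolding polys_in_def by auto
    qed
    then show ?thesis unfolding polys_in_def by simp
  qed
  have neg: "- p \<in> polys_in n" if "p \<in> polys_in n" for p :: "(nat \<Rightarrow>\<^sub>0 nat) \<Rightarrow>\<^sub>0 'a"
  proof -
    have "Poly_Mapping.keys (- p) = Poly_Mapping.keys p" by (auto simp: in_keys_iff)
    then show ?thesis using that unfolding polys_in_def by simp
  qed
  have one: "(1::(nat \<Rightarrow>\<^sub>0 nat) \<Rightarrow>\<^sub>0 'a) \<in> polys_in n" unfolding polys_in_def by simp
  show ?thesis unfolding subr_def using add mult neg one by blast
qed

lemma single0_in_polys_in: "Poly_Mapping.single 0 c \<in> polys_in n"
  unfolding polys_in_def by simp

lemma Xv_in_polys_in: "i < n \<Longrightarrow> Xv i \<in> polys_in n"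
  unfolding polys_in_def by simp

lemma poly_expand: "p = (\<Sum>\<mu>\<in>Poly_Mapping.keys p. Poly_Mapping.single \<mu> (Poly_Mapping.lookup p \<mu>))"
  by (rule poly_mapping_eqI) (auto simp: lookup_sum lookup_single when_def in_keys_iff)

lemma Xv_power: "(Xv i :: (nat \<Rightarrow>\<^sub>0 nat) \<Rightarrow>\<^sub>0 'a::comm_ring_1) ^ k = Poly_Mapping.single (Poly_Mapping.single i k) 1"
proof (induction k)
  case (Suc k) then show ?case by (simp add: mult_single single_add[symmetric] mult.commute)
qed simp

lemma prod_single1: "(\<Prod>i\<in>F. Poly_Mapping.single (g i) (1::'a::comm_ring_1)) = Poly_Mapping.single (\<Sum>i\<in>F. g i) 1"
  by (induction F rule: infinite_finite_induct) (auto simp: mult_single)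

lemma single_mono:
  "(Poly_Mapping.single \<mu> c :: (nat \<Rightarrow>\<^sub>0 nat) \<Rightarrow>\<^sub>0 'a::comm_ring_1) =
     Poly_Mapping.single 0 c * (\<Prod>i\<in>Poly_Mapping.keys \<mu>. Xv i ^ Poly_Mapping.lookup \<mu> i)"
proof -
  have "(\<Prod>i\<in>Poly_Mapping.keys \<mu>. (Xv i :: (nat \<Rightarrow>\<^sub>0 nat) \<Rightarrow>\<^sub>0 'a) ^ Poly_Mapping.lookup \<mu> i) =
        Poly_Mapping.single (\<Sum>i\<in>Poly_Mapping.keys \<mu>. Poly_Mapping.single i (Poly_Mapping.lookup \<mu> i)) 1"
    unfolding Xv_power prod_single1 by simp
  also have "(\<Sum>i\<in>Poly_Mapping.keys \<mu>. Poly_Mapping.single i (Poly_Mapping.lookup \<mu> i)) = \<mu>"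
    by (rule poly_expand[symmetric])
  finally show ?thesis by (simp add: mult_single)
qed


definition mmono :: "(nat \<Rightarrow> 'a::comm_ring_1) \<Rightarrow> (nat \<Rightarrow>\<^sub>0 nat) \<Rightarrow> 'a" where
  "mmono z \<mu> = (\<Prod>i\<in>Poly_Mapping.keys \<mu>. z i ^ Poly_Mapping.lookup \<mu> i)"

definition meval :: "(nat \<Rightarrow> 'a::comm_ring_1) \<Rightarrow> ((nat \<Rightarrow>\<^sub>0 nat) \<Rightarrow>\<^sub>0 'a) \<Rightarrow> 'a" where
  "meval z p = (\<Sum>\<mu>\<in>Poly_Mapping.keys p. Poly_Mapping.lookup p \<mu> * mmono z \<mu>)"

lemma mono_superset: "finite F \<Longrightarrow> Poly_Mapping.keys \<mu> \<subseteq> F \<Longrightarrow> mmono z \<mu> = (\<Prod>i\<in>F. z i ^ Poly_Mapping.lookup \<mu> i)"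
  unfolding mmono_def by (rule prod.mono_neutral_left) (auto simp: in_keys_iff)

lemma mono_add: "mmono z (\<mu> + \<nu>) = mmono z \<mu> * mmono z \<nu>"
proof -
  let ?F = "Poly_Mapping.keys \<mu> \<union> Poly_Mapping.keys \<nu>"
  have "mmono z (\<mu> + \<nu>) = (\<Prod>i\<in>?F. z i ^ Poly_Mapping.lookup (\<mu> + \<nu>) i)"
    by (rule mono_superset) (auto simp: keys_add_nat)
  also have "\<dots> = (\<Prod>i\<in>?F. z i ^ Poly_Mapping.lookup \<mu> i) * (\<Prod>i\<in>?F. z i ^ Poly_Mapping.lookup \<nu> i)"
    by (simp add: lookup_add power_add prod.distrib)
  also have "\<dots> = mmono z \<mu> * mmono z \<nu>"
    by (subst (1 2) mono_superset[of ?F]) auto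
  finally show ?thesis .
qed

lemma mono_zero[simp]: "mmono z 0 = 1"
  unfolding mmono_def by simp

lemma meval_superset: "finite F \<Longrightarrow> Poly_Mapping.keys p \<subseteq> F \<Longrightarrow> meval z p = (\<Sum>\<mu>\<in>F. Poly_Mapping.lookup p \<mu> * mmono z \<mu>)"
  unfolding meval_def by (rule sum.mono_neutral_left) (auto simp: in_keys_iff)

lemma meval_add: "meval z (p + q) = meval z p + meval z q"
proof -
  let ?F = "Poly_Mapping.keys p \<union> Poly_Mapping.keys q"
  have "meval z (p + q) = (\<Sum>\<mu>\<in>?F. Poly_Mapping.lookup (p + q) \<mu> * mmono z \<mu>)"
    by (rule meval_superset) (auto dest: keys_add[THEN subsetD])
  also have "\<dots> = (\<Sum>\<mu>\<in>?F. Poly_Mapping.lookup p \<mu> * mmono z \<mu>) + (\<Sum>\<mu>\<in>?F. Poly_Mapping.lookup q \<mu> * mmono z \<mu>)"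
    by (simp add: lookup_add distrib_right sum.distrib)
  also have "\<dots> = meval z p + meval z q"
    by (subst (1 2) meval_superset[of ?F]) auto
  finally show ?thesis .
qed

lemma meval_zero[simp]: "meval z 0 = 0"
  unfolding meval_def by simp

lemma meval_sum: "meval z (sum g F) = (\<Sum>i\<in>F. meval z (g i))"
  by (induction F rule: infinite_finite_induct) (auto simp: meval_add)

lemma meval_single: "meval z (Poly_Mapping.single \<mu> c) = c * mmono z \<mu>"
  unfolding meval_def by simp

lemma meval_mult: "meval z (p * q) = meval z p * meval z q"
proof -
  have "p * q = (\<Sum>\<mu>\<in>Poly_Mapping.keys p. Poly_Mapping.single \<mu> (Poly_Mapping.lookup p \<mu>)) *
                (\<Sum>\<nu>\<in>Poly_Mapping.keys q. Poly_Mapping.single \<nu> (Poly_Mapping.lookup q \<nu>))"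
    by (subst (1) poly_expand[of p], subst (1) poly_expand[of q]) (rule refl)
  also have "\<dots> = (\<Sum>\<mu>\<in>Poly_Mapping.keys p. \<Sum>\<nu>\<in>Poly_Mapping.keys q.
       Poly_Mapping.single (\<mu> + \<nu>) (Poly_Mapping.lookup p \<mu> * Poly_Mapping.lookup q \<nu>))"
    by (simp add: sum_product mult_single)
  finally have "meval z (p * q) = (\<Sum>\<mu>\<in>Poly_Mapping.keys p. \<Sum>\<nu>\<in>Poly_Mapping.keys q.
       (Poly_Mapping.lookup p \<mu> * mmono z \<mu>) * (Poly_Mapping.lookup q \<nu> * mmono z \<nu>))"
    by (simp add: meval_sum meval_single mono_add ac_simps)
  also have "\<dots> = meval z p * meval z q"
    unfolding meval_def by (simp add: sum_product)
  finally show ?thesis .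
qed

lemma meval_one[simp]: "meval z 1 = 1"
  using meval_single[of z 0 1] by simp

lemma meval_map:
  assumes f: "is_ring_hom f"
  shows "meval (f \<circ> z) (Poly_Mapping.map f q) = f (meval z q)"
proof -
  have lk: "Poly_Mapping.lookup (Poly_Mapping.map f q) \<mu> = f (Poly_Mapping.lookup q \<mu>)" for \<mu>
    using ring_homD(2)[OF f] by (auto simp: map.rep_eq when_def)
  have "meval (f \<circ> z) (Poly_Mapping.map f q) = (\<Sum>\<mu>\<in>Poly_Mapping.keys q. f (Poly_Mapping.lookup q \<mu>) * mmono (f \<circ> z) \<mu>)"
    by (subst meval_superset[of "Poly_Mapping.keys q"]) (auto simp: lk in_keys_iff ring_homD(2)[OF f])
  also have "\<dots> = f (meval z q)"
    unfolding meval_def mmono_def by (simp add: ring_homD[OF f])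
  finally show ?thesis .
qed


section \<open>Free modules and coordinates\<close>

definition frep :: "('r::comm_ring_1 \<Rightarrow> 's::comm_ring_1) \<Rightarrow> 's set \<Rightarrow> ('s \<Rightarrow> 'r) \<Rightarrow> 's \<Rightarrow> bool" where
  "frep f Bs c s \<longleftrightarrow> (\<forall>b. b \<notin> Bs \<longrightarrow> c b = 0) \<and> finite {b. c b \<noteq> 0} \<and>
     s = (\<Sum>b\<in>{b. c b \<noteq> 0}. f (c b) * b)"

definition coord :: "('r::comm_ring_1 \<Rightarrow> 's::comm_ring_1) \<Rightarrow> 's set \<Rightarrow> 's \<Rightarrow> 's \<Rightarrow> 'r" where
  "coord f Bs s = (THE c. frep f Bs c s)"

lemma frep_superset:
  assumes f: "is_ring_hom f" and "\<forall>b. b \<notin> Bs \<longrightarrow> c b = 0" "finite F" "{b. c b \<noteq> 0} \<subseteq> F"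
  shows "frep f Bs c (\<Sum>b\<in>F. f (c b) * b)"
proof -
  have "(\<Sum>b\<in>F. f (c b) * b) = (\<Sum>b\<in>{b. c b \<noteq> 0}. f (c b) * b)"
    by (rule sum.mono_neutral_right) (use assms ring_homD(2)[OF f] in auto)
  moreover have "finite {b. c b \<noteq> 0}" using assms finite_subset by blast
  ultimately show ?thesis using assms unfolding frep_def by auto
qed

lemma frep_value:
  assumes f: "is_ring_hom f" and "frep f Bs c s" "finite F" "{b. c b \<noteq> 0} \<subseteq> F"
  shows "s = (\<Sum>b\<in>F. f (c b) * b)"
proof -
  have "(\<Sum>b\<in>F. f (c b) * b) = (\<Sum>b\<in>{b. c b \<noteq> 0}. f (c b) * b)"
    by (rule sum.mono_neutral_right) (use assms ring_homD(2)[OF f] in auto)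
  then show ?thesis using assms unfolding frep_def by auto
qed

locale freemod =
  fixes f :: "'r::comm_ring_1 \<Rightarrow> 's::comm_ring_1" and Bs :: "'s set"
  assumes hom: "is_ring_hom f"
    and uniq: "\<And>s. \<exists>!c. frep f Bs c s"
begin

abbreviation "crd \<equiv> coord f Bs"

lemma crd_frep: "frep f Bs (crd s) s"
  unfolding coord_def using theI'[OF uniq] .

lemma crd_eq: "frep f Bs c s \<Longrightarrow> crd s = c"
  using crd_frep uniq by blast

lemma crd_fin: "finite {b. crd s b \<noteq> 0}"
  using crd_frep unfolding frep_def by auto

lemma crd_Bs: "b \<notin> Bs \<Longrightarrow> crd s b = 0"
  using crd_frep unfolding frep_def by auto

lemma crd_lin:
  assumes "finite I"
  shows "crd (\<Sum>i\<in>I. f (r i) * s i) = (\<lambda>b. \<Sum>i\<in>I. r i * crd (s i) b)"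
proof (rule crd_eq)
  define c where "c = (\<lambda>b. \<Sum>i\<in>I. r i * crd (s i) b)"
  define U where "U = (\<Union>i\<in>I. {b. crd (s i) b \<noteq> 0})"
  have U: "finite U" unfolding U_def using assms crd_fin by auto
  have sub: "{b. c b \<noteq> 0} \<subseteq> U" unfolding c_def U_def
  proof
    fix b assume "b \<in> {b. (\<Sum>i\<in>I. r i * crd (s i) b) \<noteq> 0}"
    then obtain i where "i \<in> I" "r i * crd (s i) b \<noteq> 0"
      by (auto elim: sum.not_neutral_contains_not_neutral)
    then show "b \<in> (\<Union>i\<in>I. {b. crd (s i) b \<noteq> 0})" by (auto intro!: bexI[of _ i])
  qed
  have out: "\<forall>b. b \<notin> Bs \<longrightarrow> c b = 0" unfolding c_def using crd_Bs by simp
  have "(\<Sum>b\<in>U. f (c b) * b) = (\<Sum>b\<in>U. \<Sum>i\<in>I. f (r i) * (f (crd (s i) b) * b))"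
    unfolding c_def by (simp add: ring_homD[OF hom] sum_distrib_right sum_distrib_left ac_simps)
  also have "\<dots> = (\<Sum>i\<in>I. f (r i) * (\<Sum>b\<in>U. f (crd (s i) b) * b))"
    by (subst sum.swap) (simp add: sum_distrib_left)
  also have "\<dots> = (\<Sum>i\<in>I. f (r i) * s i)"
  proof (rule sum.cong[OF refl])
    fix i assume i: "i \<in> I"
    have "s i = (\<Sum>b\<in>U. f (crd (s i) b) * b)"
      by (rule frep_value[OF hom crd_frep U]) (use i in \<open>auto simp: U_def\<close>)
    then show "f (r i) * (\<Sum>b\<in>U. f (crd (s i) b) * b) = f (r i) * s i" by simp
  qed
  finally have eq: "(\<Sum>b\<in>U. f (c b) * b) = (\<Sum>i\<in>I. f (r i) * s i)" .
  show "frep f Bs (\<lambda>b. \<Sum>i\<in>I. r i * crd (s i) b) (\<Sum>i\<in>I. f (r i) * s i)"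
    using frep_superset[OF hom out U sub] eq unfolding c_def by simp
qed

lemma crd_basis: "\<beta> \<in> Bs \<Longrightarrow> crd \<beta> = (\<lambda>b. if b = \<beta> then 1 else 0)"
proof (rule crd_eq)
  assume "\<beta> \<in> Bs"
  have "frep f Bs (\<lambda>b. if b = \<beta> then 1 else 0) (\<Sum>b\<in>{\<beta>}. f ((\<lambda>b. if b = \<beta> then 1 else 0) b) * b)"
    by (rule frep_superset[OF hom]) (use \<open>\<beta> \<in> Bs\<close> in auto)
  then show "frep f Bs (\<lambda>b. if b = \<beta> then 1 else 0) \<beta>" by (simp add: ring_homD[OF hom])
qed

lemma crd_combination:
  assumes "finite F" "F \<subseteq> Bs" "\<beta> \<in> F"
  shows "crd (\<Sum>b\<in>F. f (r b) * b) \<beta> = r \<beta>"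
proof -
  have "crd (\<Sum>b\<in>F. f (r b) * b) \<beta> = (\<Sum>b\<in>F. r b * crd b \<beta>)"
    using crd_lin[OF assms(1), of r "\<lambda>b. b"] by simp
  also have "\<dots> = (\<Sum>b\<in>F. if b = \<beta> then r b else 0)"
    by (rule sum.cong[OF refl]) (use assms crd_basis in auto)
  also have "\<dots> = r \<beta>" using assms by simp
  finally show ?thesis .
qed

lemma crd_ideal:
  assumes m: "ideal_in UNIV m" and x: "x \<in> ideal_gen_in UNIV (f ` m)"
  shows "crd x b \<in> m"
proof -
  have sU: "subr (UNIV :: 'r set)" unfolding subr_def by auto
  define T where "T = {s. \<forall>b. crd s b \<in> m}"
  have mi: "\<And>r y. y \<in> m \<Longrightarrow> r * y \<in> m" "\<And>y z. y \<in> m \<Longrightarrow> z \<in> m \<Longrightarrow> y + z \<in> m" "0 \<in> m"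
    using m unfolding ideal_in_def by auto
  have msum: "\<And>g I. (\<And>i. i \<in> I \<Longrightarrow> g i \<in> m) \<Longrightarrow> sum g I \<in> m"
    using ideal_in_sum[OF m sU] by blast
  have "ideal_in UNIV T"
    unfolding ideal_in_def
  proof (intro conjI ballI)
    show "T \<subseteq> UNIV" by simp
    have "crd 0 = (\<lambda>b. 0)" using crd_lin[of "{}"] by simp
    then show "0 \<in> T" unfolding T_def using mi by simp
  next
    fix x y assume "x \<in> T" "y \<in> T"
    have "crd (\<Sum>i\<in>{0::nat,1}. f 1 * (if i = 0 then x else y)) = (\<lambda>b. \<Sum>i\<in>{0::nat,1}. 1 * crd (if i = 0 then x else y) b)"
      by (rule crd_lin) simp
    then have "crd (x + y) = (\<lambda>b. crd x b + crd y b)" by (simp add: ring_homD[OF hom])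
    then show "x + y \<in> T" using \<open>x \<in> T\<close> \<open>y \<in> T\<close> mi unfolding T_def by simp
  next
    fix a x assume "x \<in> T"
    define F where "F = {b. crd x b \<noteq> 0}"
    have F: "finite F" using crd_fin F_def by simp
    have "x = (\<Sum>b\<in>F. f (crd x b) * b)"
      by (rule frep_value[OF hom crd_frep F]) (simp add: F_def)
    then have "a * x = a * (\<Sum>b\<in>F. f (crd x b) * b)" by simp
    also have "\<dots> = (\<Sum>b\<in>F. f (crd x b) * (a * b))" by (simp add: sum_distrib_left ac_simps)
    finally have "a * x = (\<Sum>b\<in>F. f (crd x b) * (a * b))" .
    then have "crd (a * x) = (\<lambda>b'. \<Sum>b\<in>F. crd x b * crd (a * b) b')" using crd_lin[OF F] by simp
    then show "a * x \<in> T" using \<open>x \<in> T\<close> unfolding T_def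
      by (auto intro!: msum) (metis mi(1) mult.commute)
  qed
  moreover have "f ` m \<subseteq> T"
  proof
    fix y assume "y \<in> f ` m"
    then obtain r where r: "r \<in> m" "y = f r" by auto
    have "crd (\<Sum>i\<in>{0::nat}. f r * 1) = (\<lambda>b. \<Sum>i\<in>{0::nat}. r * crd 1 b)" by (rule crd_lin) simp
    then have "crd y = (\<lambda>b. r * crd 1 b)" using r by simp
    then show "y \<in> T" unfolding T_def using r mi by (simp add: mult.commute)
  qed
  ultimately have "ideal_gen_in UNIV (f ` m) \<subseteq> T" by (rule ideal_gen_least)
  then show ?thesis using x unfolding T_def by auto
qed

end



section \<open>Polynomials over a subring\<close>

definition pov :: "'a::comm_ring_1 set \<Rightarrow> 'a poly \<Rightarrow> bool" where
  "pov A p \<longleftrightarrow> (\<forall>i. coeff p i \<in> A)"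

lemma pov_0[simp]: "subr A \<Longrightarrow> pov A 0"
  unfolding pov_def by (simp add: subrD)

lemma pov_const: "subr A \<Longrightarrow> c \<in> A \<Longrightarrow> pov A [:c:]"
  unfolding pov_def by (auto simp: coeff_pCons subrD split: nat.split)

lemma pov_1[simp]: "subr A \<Longrightarrow> pov A 1"
  unfolding one_pCons by (rule pov_const) (auto simp: subrD)

lemma pov_pCons: "subr A \<Longrightarrow> c \<in> A \<Longrightarrow> pov A p \<Longrightarrow> pov A (pCons c p)"
  unfolding pov_def by (auto simp: coeff_pCons split: nat.split)

lemma pov_pCons_iff: "pov A (pCons c p) \<longleftrightarrow> c \<in> A \<and> pov A p"
  unfolding pov_def by (auto simp: coeff_pCons split: nat.split)

lemma pov_X: "subr A \<Longrightarrow> pov A [:0,1:]"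
  by (auto intro!: pov_pCons simp: subrD)

lemma pov_add: "subr A \<Longrightarrow> pov A p \<Longrightarrow> pov A q \<Longrightarrow> pov A (p + q)"
  unfolding pov_def by (auto simp: subrD)

lemma pov_uminus: "subr A \<Longrightarrow> pov A p \<Longrightarrow> pov A (- p)"
  unfolding pov_def by (auto simp: subrD)

lemma pov_diff: "subr A \<Longrightarrow> pov A p \<Longrightarrow> pov A q \<Longrightarrow> pov A (p - q)"
  unfolding pov_def by (auto simp: subrD)

lemma pov_mult: "subr A \<Longrightarrow> pov A p \<Longrightarrow> pov A q \<Longrightarrow> pov A (p * q)"
  unfolding pov_def coeff_mult by (auto intro!: subr_sum subrD(4))

lemma pov_monom: "subr A \<Longrightarrow> c \<in> A \<Longrightarrow> pov A (monom c n)"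
  unfolding pov_def by (auto simp: coeff_monom subrD)

lemma pov_smult: "subr A \<Longrightarrow> c \<in> A \<Longrightarrow> pov A p \<Longrightarrow> pov A (Polynomial.smult c p)"
  unfolding pov_def by (auto simp: subrD)

lemma subr_pov: "subr A \<Longrightarrow> subr {p. pov A p}"
  unfolding subr_def[of "{p. pov A p}"] by (auto intro: pov_add pov_mult pov_uminus)

lemma pov_mono: "pov A p \<Longrightarrow> A \<subseteq> B \<Longrightarrow> pov B p"
  unfolding pov_def by auto

lemma poly_sum_lt: "degree p < n \<Longrightarrow> poly p x = (\<Sum>i<n. coeff p i * x ^ i)" for x :: "'a::comm_ring_1"
proof -
  assume "degree p < n"
  then have "(\<Sum>i<n. coeff p i * x ^ i) = (\<Sum>i\<le>degree p. coeff p i * x ^ i)"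
    by (intro sum.mono_neutral_right) (auto simp: coeff_eq_0)
  then show ?thesis by (simp add: poly_altdef)
qed

lemma poly_in_subr: "subr B \<Longrightarrow> pov B p \<Longrightarrow> x \<in> B \<Longrightarrow> poly p x \<in> B"
  unfolding poly_altdef pov_def by (auto intro!: subr_sum subrD(4) subr_power)

lemma poly_in_ideal: "ideal_in B I \<Longrightarrow> subr B \<Longrightarrow> pov I p \<Longrightarrow> x \<in> B \<Longrightarrow> poly p x \<in> I"
  unfolding poly_altdef pov_def
  by (auto intro!: ideal_in_sum ideal_inD(5) subr_power)

lemma map_poly_add_on:
  assumes "hom_on A h" "subr A" "pov A p" "pov A q"
  shows "map_poly h (p + q) = map_poly h p + map_poly h q"
  by (rule poly_eqI) (use assms in \<open>auto simp: coeff_map_poly hom_onD pov_def\<close>)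

lemma map_poly_diff_on:
  assumes "hom_on A h" "subr A" "pov A p" "pov A q"
  shows "map_poly h (p - q) = map_poly h p - map_poly h q"
  by (rule poly_eqI) (use assms in \<open>auto simp: coeff_map_poly hom_onD pov_def\<close>)

lemma map_poly_mult_on:
  assumes h: "hom_on A h" and s: "subr A" and p: "pov A p" and q: "pov A q"
  shows "map_poly h (p * q) = map_poly h p * map_poly h q"
proof (rule poly_eqI)
  fix n
  have h0: "h 0 = 0" by (rule hom_onD(2)[OF h s])
  have "coeff (map_poly h (p * q)) n = h (\<Sum>i\<le>n. coeff p i * coeff q (n-i))"
    by (simp add: coeff_map_poly h0 coeff_mult)
  also have "\<dots> = (\<Sum>i\<le>n. h (coeff p i * coeff q (n-i)))"
    by (rule hom_on_sum[OF h s]) (use p q s in \<open>auto simp: pov_def subrD\<close>)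
  also have "\<dots> = (\<Sum>i\<le>n. h (coeff p i) * h (coeff q (n-i)))"
    by (rule sum.cong[OF refl]) (use p q s in \<open>auto simp: pov_def hom_onD[OF h s]\<close>)
  also have "\<dots> = coeff (map_poly h p * map_poly h q) n"
    by (simp add: coeff_map_poly h0 coeff_mult)
  finally show "coeff (map_poly h (p * q)) n = coeff (map_poly h p * map_poly h q) n" .
qed

lemma map_poly_const_on: "hom_on A h \<Longrightarrow> subr A \<Longrightarrow> map_poly h [:c:] = [:h c:]"
  by (rule poly_eqI) (auto simp: coeff_map_poly hom_onD coeff_pCons split: nat.split)

lemma map_poly_smult_on:
  assumes "hom_on A h" "subr A" "c \<in> A" "pov A p"
  shows "map_poly h (Polynomial.smult c p) = Polynomial.smult (h c) (map_poly h p)"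
  by (rule poly_eqI) (use assms in \<open>auto simp: coeff_map_poly hom_onD pov_def\<close>)

lemma map_poly_monom_on:
  assumes "hom_on A h" "subr A"
  shows "map_poly h (monom c n) = monom (h c) n"
  by (rule poly_eqI) (use assms in \<open>auto simp: coeff_map_poly hom_onD coeff_monom\<close>)

section \<open>Adjoining one element\<close>

lemma gen_insert:
  assumes s: "subr A0" and A0: "A0 = gen_subring X"
  shows "gen_subring (insert g X) = {poly p g | p. pov A0 p}"
proof
  let ?E = "{poly p g | p. pov A0 p}"
  have sE: "subr ?E"
    unfolding subr_def
  proof (intro conjI ballI)
    show "1 \<in> ?E" using pov_1[OF s] by (metis (mono_tags, lifting) mem_Collect_eq poly_1)
  next
    fix x y assume "x \<in> ?E" "y \<in> ?E"
    then obtain p q where "pov A0 p" "pov A0 q" "x = poly p g" "y = poly q g" by auto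
    then show "x + y \<in> ?E" "x * y \<in> ?E"
      using pov_add[OF s] pov_mult[OF s] by (metis (mono_tags, lifting) mem_Collect_eq poly_add poly_mult)+
  next
    fix x assume "x \<in> ?E"
    then obtain p where "pov A0 p" "x = poly p g" by auto
    then show "- x \<in> ?E" using pov_uminus[OF s] by (metis (mono_tags, lifting) mem_Collect_eq poly_minus)
  qed
  have XE: "insert g X \<subseteq> ?E"
  proof
    fix x assume "x \<in> insert g X"
    then show "x \<in> ?E"
    proof
      assume "x = g"
      then have "x = poly [:0,1:] g" by simp
      then show ?thesis using pov_X[OF s] by blast
    next
      assume "x \<in> X"
      then have "x \<in> A0" using A0 gen_subring_base by blast
      then have "x = poly [:x:] g" "pov A0 [:x:]" using pov_const[OF s] by auto
      then show ?thesis by blast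
    qed
  qed
  show "gen_subring (insert g X) \<subseteq> ?E" by (rule gen_subring_least[OF sE XE])
  show "?E \<subseteq> gen_subring (insert g X)"
  proof
    fix x assume "x \<in> ?E"
    then obtain p where p: "pov A0 p" "x = poly p g" by auto
    have "A0 \<subseteq> gen_subring (insert g X)" unfolding A0 by (rule gen_subring_mono) auto
    then have "pov (gen_subring (insert g X)) p" using p(1) by (rule pov_mono[rotated])
    then show "x \<in> gen_subring (insert g X)" unfolding p(2)
      by (rule poly_in_subr[OF subr_gen_subring]) (auto intro: gen_subring.base)
  qed
qed


lemma alg_closed_infinite:
  assumes "alg_closed_field TYPE('k::field)"
  shows "infinite (UNIV :: 'k set)"
proof
  assume fin: "finite (UNIV :: 'k set)"
  define q :: "'k poly" where "q = (\<Prod>a\<in>UNIV. [:-a, 1:])"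
  have dq: "degree q = card (UNIV :: 'k set)"
    unfolding q_def by (subst degree_prod_eq_sum_degree) (auto simp: fin)
  have "card (UNIV :: 'k set) > 0" using fin by (simp add: card_gt_0_iff)
  then have d: "degree (1 + q) > 0" using dq by (simp add: degree_add_eq_right)
  obtain x where "poly (1 + q) x = 0" using assms d unfolding alg_closed_field_def by blast
  moreover have "poly q x = 0" unfolding q_def poly_prod using fin
    by (auto simp: prod_zero_iff)
  ultimately show False by simp
qed

locale step =
  fixes A0 A1 :: "'a::comm_ring_1 set" and g :: 'a and P1 :: "'a set" and phi :: "'k::field \<Rightarrow> 'a"
  assumes s0: "subr A0" and s1: "subr A1" and A1: "A1 = {poly p g | p. pov A0 p}"
    and P1: "prime_ideal_in A1 P1" and phiA0: "range phi \<subseteq> A0" and phi: "is_ring_hom phi"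
begin

definition "P0 = P1 \<inter> A0"

lemma A01: "A0 \<subseteq> A1"
proof
  fix x assume "x \<in> A0"
  then have "pov A0 [:x:]" "poly [:x:] g = x" using pov_const[OF s0] by auto
  then show "x \<in> A1" unfolding A1 by (metis (mono_tags, lifting) mem_Collect_eq)
qed

lemma gA1: "g \<in> A1"
proof -
  have "poly [:0,1:] g = g" by simp
  then show ?thesis unfolding A1 using pov_X[OF s0] by (metis (mono_tags, lifting) mem_Collect_eq)
qed

lemma polyA1: "pov A0 p \<Longrightarrow> poly p g \<in> A1"
  unfolding A1 by blast

lemma P1i: "ideal_in A1 P1" using prime_idealD(1)[OF P1] .

lemma P0P1: "P0 \<subseteq> P1" unfolding P0_def by auto

lemma P0_prime: "prime_ideal_in A0 P0"
proof -
  have "ideal_in A0 P0"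
    unfolding ideal_in_def P0_def using ideal_inD[OF P1i s1] A01 s0 by (auto simp: subrD)
  moreover have "P0 \<noteq> A0" using prime_idealD(2)[OF P1] s0 subrD(1) unfolding P0_def by blast
  moreover have "\<forall>a\<in>A0. \<forall>b\<in>A0. a * b \<in> P0 \<longrightarrow> a \<in> P0 \<or> b \<in> P0"
    using prime_idealD(3)[OF P1] A01 unfolding P0_def by blast
  ultimately show ?thesis unfolding prime_ideal_in_def by blast
qed

lemma poly_P1: "pov P0 p \<Longrightarrow> poly p g \<in> P1"
  by (rule poly_in_ideal[OF P1i s1 pov_mono[OF _ P0P1] gA1])

lemma ext:
  fixes \<chi>0 :: "'a \<Rightarrow> 'k"
  assumes h0: "hom_on A0 \<chi>0" and hphi: "\<And>c. \<chi>0 (phi c) = c"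
    and cond: "\<And>p. pov A0 p \<Longrightarrow> poly p g \<in> P1 \<Longrightarrow> poly (map_poly \<chi>0 p) c0 = 0"
  shows "\<exists>\<chi>. hom_on A1 \<chi> \<and> (\<forall>c. \<chi> (phi c) = c) \<and> (\<forall>x\<in>P1. \<chi> x = 0) \<and>
            (\<forall>p. pov A0 p \<longrightarrow> \<chi> (poly p g) = poly (map_poly \<chi>0 p) c0)"
proof -
  define rep where "rep x = (SOME p. pov A0 p \<and> poly p g = x)" for x
  define \<chi> where "\<chi> x = poly (map_poly \<chi>0 (rep x)) c0" for x
  have key: "\<chi> (poly p g) = poly (map_poly \<chi>0 p) c0" if p: "pov A0 p" for p
  proof -
    have "\<exists>q. pov A0 q \<and> poly q g = poly p g" using p by blast
    then have r: "pov A0 (rep (poly p g))" "poly (rep (poly p g)) g = poly p g"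
      unfolding rep_def by (metis (mono_tags, lifting) someI_ex)+
    have "poly (rep (poly p g) - p) g = 0" using r by simp
    then have "poly (rep (poly p g) - p) g \<in> P1" using ideal_inD(2)[OF P1i s1] by simp
    then have "poly (map_poly \<chi>0 (rep (poly p g) - p)) c0 = 0"
      by (rule cond[OF pov_diff[OF s0 r(1) p]])
    then show ?thesis unfolding \<chi>_def using map_poly_diff_on[OF h0 s0 r(1) p] by simp
  qed
  have "hom_on A1 \<chi>" unfolding hom_on_def
  proof (intro conjI ballI)
    have "\<chi> 1 = \<chi> (poly 1 g)" by simp
    also have "\<dots> = 1" using key[OF pov_1[OF s0]] map_poly_const_on[OF h0 s0, of 1] hom_onD(1)[OF h0 s0]
      by (simp add: one_pCons)
    finally show "\<chi> 1 = 1" .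
  next
    fix x y assume "x \<in> A1" "y \<in> A1"
    then obtain p q where pq: "pov A0 p" "pov A0 q" "x = poly p g" "y = poly q g" unfolding A1 by auto
    have "\<chi> (x + y) = \<chi> (poly (p + q) g)" using pq by simp
    also have "\<dots> = \<chi> x + \<chi> y" using key[OF pov_add[OF s0 pq(1,2)]] key[OF pq(1)] key[OF pq(2)] pq
      map_poly_add_on[OF h0 s0 pq(1,2)] by simp
    finally show "\<chi> (x + y) = \<chi> x + \<chi> y" .
    have "\<chi> (x * y) = \<chi> (poly (p * q) g)" using pq by simp
    also have "\<dots> = \<chi> x * \<chi> y" using key[OF pov_mult[OF s0 pq(1,2)]] key[OF pq(1)] key[OF pq(2)] pq
      map_poly_mult_on[OF h0 s0 pq(1,2)] by simp
    finally show "\<chi> (x * y) = \<chi> x * \<chi> y" .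
  qed
  moreover have "\<chi> (phi c) = c" for c
  proof -
    have pc: "pov A0 [:phi c:]" using pov_const[OF s0] phiA0 by auto
    have "\<chi> (phi c) = \<chi> (poly [:phi c:] g)" by simp
    also have "\<dots> = c" using key[OF pc] map_poly_const_on[OF h0 s0] hphi by simp
    finally show ?thesis .
  qed
  moreover have "\<chi> x = 0" if x: "x \<in> P1" for x
  proof -
    have "x \<in> A1" using x ideal_inD(1)[OF P1i s1] by blast
    then obtain p where p: "pov A0 p" "x = poly p g" unfolding A1 by auto
    then show ?thesis using key[OF p(1)] cond[OF p(1)] x by simp
  qed
  ultimately show ?thesis using key by blast
qed

definition "good A P \<alpha> \<longleftrightarrow> (\<exists>\<chi>::'a \<Rightarrow> 'k. hom_on A \<chi> \<and> (\<forall>c. \<chi> (phi c) = c) \<and> (\<forall>x\<in>P. \<chi> x = 0) \<and> \<chi> \<alpha> \<noteq> 0)"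

lemma caseT:
  assumes IH: "\<And>\<alpha>0. \<alpha>0 \<in> A0 \<Longrightarrow> \<alpha>0 \<notin> P0 \<Longrightarrow> good A0 P0 \<alpha>0"
    and T: "\<And>p. pov A0 p \<Longrightarrow> poly p g \<in> P1 \<Longrightarrow> pov P0 p"
    and inf: "infinite (UNIV :: 'k set)"
    and \<alpha>: "\<alpha> \<in> A1" "\<alpha> \<notin> P1"
  shows "good A1 P1 \<alpha>"
proof -
  obtain q where q: "pov A0 q" "\<alpha> = poly q g" using \<alpha>(1) unfolding A1 by auto
  have "\<not> pov P0 q" using poly_P1 q \<alpha>(2) by blast
  then obtain j where j: "coeff q j \<notin> P0" unfolding pov_def by auto
  obtain \<chi>0 where \<chi>0: "hom_on A0 \<chi>0" "\<And>c. \<chi>0 (phi c) = c" "\<And>x. x \<in> P0 \<Longrightarrow> \<chi>0 x = 0" "\<chi>0 (coeff q j) \<noteq> 0"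
    using IH[of "coeff q j"] q(1) j unfolding good_def pov_def by blast
  have h00: "\<chi>0 0 = 0" by (rule hom_onD(2)[OF \<chi>0(1) s0])
  have "coeff (map_poly \<chi>0 q) j \<noteq> 0" using \<chi>0(4) by (simp add: coeff_map_poly h00)
  then have "map_poly \<chi>0 q \<noteq> 0" by auto
  then have "finite {x. poly (map_poly \<chi>0 q) x = 0}" by (rule poly_roots_finite)
  then obtain c0 where c0: "poly (map_poly \<chi>0 q) c0 \<noteq> 0" using inf
    by (metis (mono_tags, lifting) UNIV_I ex_new_if_finite mem_Collect_eq)
  have cond: "poly (map_poly \<chi>0 p) c0 = 0" if "pov A0 p" "poly p g \<in> P1" for p
  proof -
    have "map_poly \<chi>0 p = 0" using T[OF that] \<chi>0(3) unfolding pov_def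
      by (intro poly_eqI) (simp add: coeff_map_poly h00)
    then show ?thesis by simp
  qed
  obtain \<chi> where \<chi>: "hom_on A1 \<chi>" "\<forall>c. \<chi> (phi c) = c" "\<forall>x\<in>P1. \<chi> x = 0"
      "\<forall>p. pov A0 p \<longrightarrow> \<chi> (poly p g) = poly (map_poly \<chi>0 p) c0"
    using ext[OF \<chi>0(1,2) cond] by blast
  have "\<chi> \<alpha> \<noteq> 0" using \<chi>(4) q c0 by simp
  then show ?thesis unfolding good_def using \<chi> by blast
qed

end



context step begin

lemma P0i: "ideal_in A0 P0" using prime_idealD(1)[OF P0_prime] .

lemma MR:
  assumes \<alpha>: "\<alpha> \<in> A1" "\<alpha> \<notin> P1"
  shows "pov A0 b \<Longrightarrow> poly b \<alpha> \<in> P1 \<Longrightarrow> \<not> pov P0 b \<Longrightarrow> \<exists>c u. c \<in> A0 \<and> c \<notin> P0 \<and> u \<in> A1 \<and> c - \<alpha> * u \<in> P1"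
proof (induction "degree b" arbitrary: b rule: less_induct)
  case less
  obtain c b' where b: "b = pCons c b'" by (cases b) auto
  have cA: "c \<in> A0" and b'A: "pov A0 b'" using less.prems(1) unfolding b pov_pCons_iff by auto
  have u: "poly b' \<alpha> \<in> A1" by (rule poly_in_subr[OF s1 pov_mono[OF b'A A01] \<alpha>(1)])
  have eq: "poly b \<alpha> = c + \<alpha> * poly b' \<alpha>" unfolding b by simp
  show ?case
  proof (cases "c \<in> P0")
    case False
    have "c - \<alpha> * (- poly b' \<alpha>) = poly b \<alpha>" using eq by simp
    then show ?thesis using False cA u less.prems(2) s1 by (metis subrD(5))
  next
    case True
    have cP1: "c \<in> P1" using True P0P1 by blast
    have "\<alpha> * poly b' \<alpha> = poly b \<alpha> - c" using eq by simp
    also have "\<dots> \<in> P1" using ideal_inD(7)[OF P1i s1 less.prems(2) cP1] .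
    finally have "poly b' \<alpha> \<in> P1" using prime_idealD(3)[OF P1 \<alpha>(1) u] \<alpha>(2) by blast
    moreover have nb': "\<not> pov P0 b'" using less.prems(3) True unfolding b pov_pCons_iff by auto
    moreover have "degree b' < degree b"
    proof -
      have "b' \<noteq> 0" using nb' ideal_inD(2)[OF P0i s0] unfolding pov_def by auto
      then show ?thesis unfolding b by simp
    qed
    ultimately show ?thesis using less.hyps b'A by blast
  qed
qed

end

locale alg_step = step +
  fixes H :: "'a poly" and d :: nat
  assumes H: "pov A0 H" and HP: "poly H g \<in> P1" and Hd: "degree H = d"
    and Hmin: "\<And>p. pov A0 p \<Longrightarrow> poly p g \<in> P1 \<Longrightarrow> degree p < d \<Longrightarrow> pov P0 p"
    and Hnot: "\<not> pov P0 H"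
begin

abbreviation "a \<equiv> coeff H d"

lemma aA: "a \<in> A0" using H unfolding pov_def by auto

lemma d_pos: "d > 0"
proof (rule ccontr)
  assume "\<not> d > 0"
  then have d0: "d = 0" by simp
  then have "poly H g = coeff H 0" using Hd by (simp add: poly_altdef)
  then have "coeff H 0 \<in> P0" using HP aA d0 unfolding P0_def by auto
  moreover have "coeff H i \<in> P0" if "i > 0" for i
    using that Hd d0 ideal_inD(2)[OF P0i s0] by (simp add: coeff_eq_0)
  ultimately have "pov P0 H" unfolding pov_def by (metis gr0I)
  then show False using Hnot by simp
qed

lemma a_notP0: "a \<notin> P0"
proof
  assume aP: "a \<in> P0"
  define H' where "H' = H - monom a d"
  have H'A: "pov A0 H'" unfolding H'_def by (rule pov_diff[OF s0 H pov_monom[OF s0 aA]])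
  have "poly H' g = poly H g - a * g ^ d" unfolding H'_def by (simp add: poly_monom)
  also have "\<dots> \<in> P1"
  proof (rule ideal_inD(7)[OF P1i s1 HP])
    have "a \<in> P1" using aP P0P1 by blast
    then show "a * g ^ d \<in> P1" using ideal_inD(5)[OF P1i s1 subr_power[OF s1 gA1]] by blast
  qed
  finally have H'P: "poly H' g \<in> P1" .
  have "degree H' \<le> d - 1"
  proof (rule degree_le, intro allI impI)
    fix i assume "i > d - 1"
    then have "i \<ge> d" using d_pos by simp
    then show "coeff H' i = 0" unfolding H'_def using Hd
      by (cases "i = d") (auto simp: coeff_monom coeff_eq_0)
  qed
  then have "degree H' < d" using d_pos by simp
  then have "pov P0 H'" using Hmin H'A H'P by blast
  moreover have "pov P0 (monom a d)" using aP unfolding pov_def by (simp add: coeff_monom ideal_inD(2)[OF P0i s0])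
  ultimately have "pov P0 (H' + monom a d)" unfolding pov_def using ideal_inD(3)[OF P0i s0] by simp
  then show False using Hnot unfolding H'_def by simp
qed

lemma PD:
  "pov A0 p \<Longrightarrow> \<exists>e Q R. pov A0 Q \<and> pov A0 R \<and> Polynomial.smult (a ^ e) p = Q * H + R \<and> degree R < d"
proof (induction "degree p" arbitrary: p rule: less_induct)
  case less
  show ?case
  proof (cases "degree p < d")
    case True
    then show ?thesis using less.prems pov_0[OF s0] by (intro exI[of _ 0] exI[of _ 0] exI[of _ p]) simp
  next
    case False
    define n where "n = degree p"
    define lp where "lp = coeff p n"
    define k where "k = n - d"
    define p' where "p' = Polynomial.smult a p - monom lp k * H"
    have lpA: "lp \<in> A0" using less.prems unfolding pov_def lp_def by auto
    have p'A: "pov A0 p'" unfolding p'_def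
      by (rule pov_diff[OF s0 pov_smult[OF s0 aA less.prems] pov_mult[OF s0 pov_monom[OF s0 lpA] H]])
    have nd: "n \<ge> d" using False n_def by simp
    have "degree p' \<le> n - 1"
    proof (rule degree_le, intro allI impI)
      fix i assume "i > n - 1"
      then have i: "i \<ge> n" using nd d_pos by simp
      show "coeff p' i = 0"
      proof (cases "i = n")
        case True
        have "coeff (monom lp k * H) n = lp * a" using nd by (simp add: coeff_monom_mult k_def)
        then show ?thesis unfolding p'_def using True by (simp add: lp_def mult.commute)
      next
        case False
        then have "i > n" using i by simp
        then show ?thesis unfolding p'_def using nd Hd
          by (simp add: coeff_monom_mult k_def coeff_eq_0 n_def)
      qed
    qed
    then have "degree p' < degree p" using nd d_pos n_def by simp
    then obtain e Q R where QR: "pov A0 Q" "pov A0 R" "Polynomial.smult (a ^ e) p' = Q * H + R" "degree R < d"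
      using less.hyps p'A by blast
    have "Polynomial.smult (a ^ Suc e) p = Polynomial.smult (a ^ e) (p' + monom lp k * H)"
      unfolding p'_def by (simp add: mult.commute)
    also have "\<dots> = (Q + Polynomial.smult (a ^ e) (monom lp k)) * H + R"
      using QR(3) by (simp add: smult_add_right algebra_simps)
    finally show ?thesis using QR pov_add[OF s0 QR(1) pov_smult[OF s0 subr_power[OF s0 aA] pov_monom[OF s0 lpA]]]
      by blast
  qed
qed

lemma cond:
  fixes \<chi>0 :: "'a \<Rightarrow> 'k::field"
  assumes h0: "hom_on A0 \<chi>0" and kill: "\<And>x. x \<in> P0 \<Longrightarrow> \<chi>0 x = 0" and a0: "\<chi>0 a \<noteq> 0"
    and c0: "poly (map_poly \<chi>0 H) c0 = 0"
    and p: "pov A0 p" "poly p g \<in> P1"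
  shows "poly (map_poly \<chi>0 p) c0 = 0"
proof -
  obtain e Q R where QR: "pov A0 Q" "pov A0 R" "Polynomial.smult (a ^ e) p = Q * H + R" "degree R < d"
    using PD[OF p(1)] by blast
  have "poly R g = a ^ e * poly p g - poly Q g * poly H g"
    using arg_cong[OF QR(3), of "\<lambda>q. poly q g"] by simp
  also have "\<dots> \<in> P1"
    by (rule ideal_inD(7)[OF P1i s1 ideal_inD(4)[OF P1i s1 _ p(2)] ideal_inD(4)[OF P1i s1 _ HP]])
      (use subr_power[OF s1] A01 aA polyA1 QR(1) in auto)
  finally have "pov P0 R" using Hmin QR(2,4) by blast
  have h00: "\<chi>0 0 = 0" by (rule hom_onD(2)[OF h0 s0])
  have mR: "map_poly \<chi>0 R = 0"
    using \<open>pov P0 R\<close> kill unfolding pov_def by (intro poly_eqI) (simp add: coeff_map_poly h00)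
  have "map_poly \<chi>0 (Polynomial.smult (a ^ e) p) = map_poly \<chi>0 (Q * H + R)" using QR(3) by simp
  then have "Polynomial.smult (\<chi>0 a ^ e) (map_poly \<chi>0 p) = map_poly \<chi>0 Q * map_poly \<chi>0 H"
    using map_poly_smult_on[OF h0 s0 subr_power[OF s0 aA] p(1)] hom_on_power[OF h0 s0 aA]
      map_poly_add_on[OF h0 s0 pov_mult[OF s0 QR(1) H] QR(2)] map_poly_mult_on[OF h0 s0 QR(1) H] mR
    by simp
  then have "\<chi>0 a ^ e * poly (map_poly \<chi>0 p) c0 = 0"
    using arg_cong[of _ _ "\<lambda>q. poly q c0"] c0 by (metis mult_zero_right poly_mult poly_smult)
  then show ?thesis using a0 by simp
qed

lemma root_exists:
  fixes \<chi>0 :: "'a \<Rightarrow> 'k::field"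
  assumes alg: "alg_closed_field TYPE('k::field)" and h0: "hom_on A0 \<chi>0" and a0: "\<chi>0 a \<noteq> 0"
  shows "\<exists>c0. poly (map_poly \<chi>0 H) c0 = 0"
proof -
  have h00: "\<chi>0 0 = 0" by (rule hom_onD(2)[OF h0 s0])
  have "degree (map_poly \<chi>0 H) = d"
  proof (rule antisym)
    show "degree (map_poly \<chi>0 H) \<le> d" using Hd by (intro degree_le) (simp add: coeff_map_poly h00 coeff_eq_0)
    show "d \<le> degree (map_poly \<chi>0 H)" using a0 by (intro le_degree) (simp add: coeff_map_poly h00)
  qed
  then show ?thesis using alg d_pos unfolding alg_closed_field_def by auto
qed

end



lemma sum_delta_mult: "k < (d::nat) \<Longrightarrow> (\<Sum>j<d. (if k = j then t else 0) * f j) = t * (f k :: 'a::comm_ring_1)"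
proof -
  assume k: "k < d"
  have "(\<Sum>j<d. (if k = j then t else 0) * f j) = (\<Sum>j<d. if k = j then t * f j else 0)" by (rule sum.cong) auto
  also have "\<dots> = t * f k" using k by (simp add: sum.delta sum.delta')
  finally show ?thesis .
qed

lemma det_in_subr:
  assumes s: "subr S" and A: "\<And>i j. i < dim_row A \<Longrightarrow> j < dim_col A \<Longrightarrow> A $$ (i,j) \<in> S"
  shows "det A \<in> S"
proof (cases "dim_row A = dim_col A")
  case True
  have "(\<Sum>p\<in>{p. p permutes {0..<dim_row A}}. signof p * (\<Prod>i = 0..<dim_row A. A $$ (i, p i))) \<in> S"
  proof (rule subr_sum[OF s])
    fix p assume "p \<in> {p. p permutes {0..<dim_row A}}"
    then have p: "p permutes {0..<dim_row A}" by simp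
    have m1: "-1 \<in> S" by (rule subrD(5)[OF s subrD(1)[OF s]])
    have "(signof p :: 'a) \<in> {1, -1}" by (rule signof_pm_one)
    then have "(signof p :: 'a) \<in> S" using subrD(1)[OF s] m1 by auto
    moreover have "(\<Prod>i = 0..<dim_row A. A $$ (i, p i)) \<in> S"
    proof (rule subr_prod[OF s])
      fix i assume "i \<in> {0..<dim_row A}"
      then have "i < dim_row A" "p i < dim_col A" using permutes_in_image[OF p] True by auto
      then show "A $$ (i, p i) \<in> S" by (rule A)
    qed
    ultimately show "signof p * (\<Prod>i = 0..<dim_row A. A $$ (i, p i)) \<in> S" by (rule subrD(4)[OF s])
  qed
  then show ?thesis unfolding det_def using True by simp
next
  case False
  then show ?thesis unfolding det_def using s by (simp add: subrD)
qed

lemma adj_in_subr: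
  assumes s: "subr S" and A: "\<And>i j. i < dim_row A \<Longrightarrow> j < dim_col A \<Longrightarrow> A $$ (i,j) \<in> S"
    and ij: "i < dim_row A" "j < dim_col A"
  shows "adj_mat A $$ (i,j) \<in> S"
proof -
  have "det (mat_delete A j i) \<in> S"
    by (rule det_in_subr[OF s]) (auto simp: mat_delete_def intro!: A)
  moreover have "(-1::'a) ^ (j + i) \<in> S" using s by (auto intro!: subr_power simp: subrD)
  ultimately have "(-1::'a) ^ (j + i) * det (mat_delete A j i) \<in> S" by (rule subrD(4)[OF s, rotated])
  then show ?thesis unfolding adj_mat_def cofactor_def using ij by simp
qed

context alg_step begin

lemma ALG:
  assumes \<alpha>: "\<alpha> \<in> A1"
  shows "\<exists>b. pov A0 b \<and> poly b \<alpha> \<in> P1 \<and> \<not> pov P0 b"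
proof -
  obtain q where q: "pov A0 q" "\<alpha> = poly q g" using \<alpha> unfolding A1 by auto
  have "\<forall>i. \<exists>e Q R. pov A0 Q \<and> pov A0 R \<and> Polynomial.smult (a ^ e) (monom 1 i * q) = Q * H + R \<and> degree R < d"
    using PD[OF pov_mult[OF s0 pov_monom[OF s0 subrD(1)[OF s0]] q(1)]] by blast
  then obtain e Q R where QR: "\<And>i. pov A0 (Q i)" "\<And>i. pov A0 (R i)"
    "\<And>i. Polynomial.smult (a ^ e i) (monom 1 i * q) = Q i * H + R i" "\<And>i. degree (R i) < d"
    by metis
  define E where "E = (\<Sum>i<d. e i)"
  define R' where "R' i = Polynomial.smult (a ^ (E - e i)) (R i)" for i
  define Q' where "Q' i = Polynomial.smult (a ^ (E - e i)) (Q i)" for i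
  have eE: "i < d \<Longrightarrow> e i \<le> E" for i unfolding E_def by (rule member_le_sum) auto
  have R'A: "pov A0 (R' i)" for i unfolding R'_def by (rule pov_smult[OF s0 subr_power[OF s0 aA] QR(2)])
  have Q'A: "pov A0 (Q' i)" for i unfolding Q'_def by (rule pov_smult[OF s0 subr_power[OF s0 aA] QR(1)])
  have R'd: "degree (R' i) < d" for i unfolding R'_def using QR(4)[of i] degree_smult_le le_less_trans by blast
  have QR': "Polynomial.smult (a ^ E) (monom 1 i * q) = Q' i * H + R' i" if "i < d" for i
  proof -
    have "Polynomial.smult (a ^ E) (monom 1 i * q) = Polynomial.smult (a ^ (E - e i)) (Polynomial.smult (a ^ e i) (monom 1 i * q))"
      using eE[OF that] by (simp add: power_add[symmetric])
    also have "\<dots> = Q' i * H + R' i" unfolding QR(3) Q'_def R'_def by (simp add: smult_add_right)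
    finally show ?thesis .
  qed
  define t where "t = a ^ E * \<alpha>"
  define M where "M = mat d d (\<lambda>(i,j). coeff (R' i) j)"
  have tA: "t \<in> A1" unfolding t_def using subr_power[OF s1] A01 aA \<alpha> s1 by (auto simp: subrD)
  have MA: "M $$ (i,j) \<in> A0" if "i < d" "j < d" for i j unfolding M_def using that R'A by (simp add: pov_def)
  have W: "t * g ^ i - (\<Sum>j<d. M $$ (i,j) * g ^ j) \<in> P1" if i: "i < d" for i
  proof -
    have "a ^ E * (g ^ i * poly q g) = poly (Q' i) g * poly H g + poly (R' i) g"
      using arg_cong[OF QR'[OF i], of "\<lambda>p. poly p g"] by (simp add: poly_monom)
    moreover have "poly (R' i) g = (\<Sum>j<d. M $$ (i,j) * g ^ j)"
      unfolding poly_sum_lt[OF R'd] M_def using i by (intro sum.cong) auto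
    ultimately have "t * g ^ i - (\<Sum>j<d. M $$ (i,j) * g ^ j) = poly (Q' i) g * poly H g"
      unfolding t_def q(2) by (simp add: algebra_simps)
    also have "\<dots> \<in> P1" by (rule ideal_inD(4)[OF P1i s1 polyA1[OF Q'A] HP])
    finally show ?thesis .
  qed
  define cp where "cp = char_poly M"
  have Mc: "M \<in> carrier_mat d d" unfolding M_def by simp
  define N where "N = map_mat (\<lambda>p. poly p t) (char_poly_matrix M)"
  have ev: "comm_ring_hom (\<lambda>p. poly p t)" by unfold_locales auto
  have detN: "det N = poly cp t" unfolding N_def cp_def char_poly_def by (rule comm_ring_hom.hom_det[OF ev])
  have Nc: "N \<in> carrier_mat d d" unfolding N_def using Mc by simp
  have Nij: "N $$ (i,j) = (if i = j then t else 0) - M $$ (i,j)" if "i < d" "j < d" for i j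
    unfolding N_def char_poly_matrix_def using that Mc by auto
  have NA: "N $$ (i,j) \<in> A1" if "i < dim_row N" "j < dim_col N" for i j
  proof -
    have ij: "i < d" "j < d" using that Nc by auto
    have "M $$ (i,j) \<in> A1" using MA[OF ij] A01 by blast
    then show ?thesis unfolding Nij[OF ij] using tA subrD(1,2,6)[OF s1] by auto
  qed
  define v where "v = vec d (\<lambda>j. g ^ j)"
  have vc: "v \<in> carrier_vec d" unfolding v_def by simp
  have Nv: "(N *\<^sub>v v) $ k = t * g ^ k - (\<Sum>j<d. M $$ (k,j) * g ^ j)" if k: "k < d" for k
  proof -
    have "(N *\<^sub>v v) $ k = row N k \<bullet> v" using k Nc by simp
    also have "\<dots> = (\<Sum>j\<in>{0..<d}. row N k $ j * v $ j)" unfolding scalar_prod_def using vc by simp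
    also have "\<dots> = (\<Sum>j<d. ((if k = j then t else 0) * g ^ j - M $$ (k,j) * g ^ j))"
      using k Nc by (auto simp: v_def lessThan_atLeast0 Nij algebra_simps intro!: sum.cong)
    also have "\<dots> = (\<Sum>j<d. (if k = j then t else 0) * g ^ j) - (\<Sum>j<d. M $$ (k,j) * g ^ j)"
      by (simp add: sum_subtractf)
    also have "(\<Sum>j<d. (if k = j then t else 0) * g ^ j) = t * g ^ k" using k by (rule sum_delta_mult)
    finally show ?thesis .
  qed
  have adjA: "adj_mat N $$ (i,j) \<in> A1" if "i < d" "j < d" for i j
    by (rule adj_in_subr[OF s1 NA]) (use that Nc in auto)
  have adjc: "adj_mat N \<in> carrier_mat d d" using adj_mat(1)[OF Nc] .
  have "(adj_mat N * N) *\<^sub>v v = adj_mat N *\<^sub>v (N *\<^sub>v v)"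
    by (rule assoc_mult_mat_vec[OF adjc Nc vc])
  then have eq0: "((adj_mat N * N) *\<^sub>v v) $ 0 = (adj_mat N *\<^sub>v (N *\<^sub>v v)) $ 0" by simp
  have lhs: "((adj_mat N * N) *\<^sub>v v) $ 0 = det N"
  proof -
    have "((adj_mat N * N) *\<^sub>v v) $ 0 = ((det N \<cdot>\<^sub>m 1\<^sub>m d) *\<^sub>v v) $ 0" using adj_mat(3)[OF Nc] by simp
    also have "\<dots> = row (det N \<cdot>\<^sub>m 1\<^sub>m d) 0 \<bullet> v" using d_pos by simp
    also have "\<dots> = (\<Sum>j\<in>{0..<d}. row (det N \<cdot>\<^sub>m 1\<^sub>m d) 0 $ j * v $ j)" unfolding scalar_prod_def using vc by simp
    also have "\<dots> = (\<Sum>j<d. (if 0 = j then det N else 0) * g ^ j)"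
      using d_pos by (auto simp: v_def lessThan_atLeast0 intro!: sum.cong)
    also have "\<dots> = det N * g ^ 0" using d_pos by (rule sum_delta_mult)
    also have "\<dots> = det N" by simp
    finally show ?thesis .
  qed
  have rhs: "(adj_mat N *\<^sub>v (N *\<^sub>v v)) $ 0 = (\<Sum>k<d. adj_mat N $$ (0,k) * (N *\<^sub>v v) $ k)"
  proof -
    have "(adj_mat N *\<^sub>v (N *\<^sub>v v)) $ 0 = row (adj_mat N) 0 \<bullet> (N *\<^sub>v v)" using d_pos adjc by simp
    also have "\<dots> = (\<Sum>k\<in>{0..<d}. row (adj_mat N) 0 $ k * (N *\<^sub>v v) $ k)" unfolding scalar_prod_def using Nc by simp
    also have "\<dots> = (\<Sum>k<d. adj_mat N $$ (0,k) * (N *\<^sub>v v) $ k)"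
      using d_pos adjc by (auto simp: lessThan_atLeast0 intro!: sum.cong)
    finally show ?thesis .
  qed
  have "det N = (\<Sum>k<d. adj_mat N $$ (0,k) * (N *\<^sub>v v) $ k)" using eq0 lhs rhs by simp
  also have "\<dots> \<in> P1"
  proof (rule ideal_in_sum[OF P1i s1])
    fix k assume "k \<in> {..<d}"
    then have k: "k < d" by simp
    show "adj_mat N $$ (0,k) * (N *\<^sub>v v) $ k \<in> P1"
      unfolding Nv[OF k] by (rule ideal_inD(4)[OF P1i s1 adjA W[OF k]]) (use d_pos k in auto)
  qed
  finally have "det N \<in> P1" .
  then have cpP: "poly cp t \<in> P1" using detN by simp
  have cpd: "degree cp = d" "coeff cp d = 1" using degree_monic_char_poly[OF Mc] unfolding cp_def by auto
  have cpA: "pov A0 cp"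
  proof -
    have "char_poly_matrix M $$ (i,j) \<in> {p. pov A0 p}" if "i < d" "j < d" for i j
      using that Mc
      by (cases "i = j") (auto simp: char_poly_matrix_def intro!: pov_pCons[OF s0] pov_const[OF s0] subrD(5)[OF s0] MA pov_1[OF s0] subrD(1)[OF s0])
    moreover have "dim_row (char_poly_matrix M) = d" "dim_col (char_poly_matrix M) = d"
      using char_poly_matrix_closed[OF Mc] by auto
    ultimately have "det (char_poly_matrix M) \<in> {p. pov A0 p}"
      by (intro det_in_subr[OF subr_pov[OF s0]]) auto
    then show ?thesis unfolding cp_def char_poly_def by simp
  qed
  define b where "b = (\<Sum>k\<le>d. monom (coeff cp k * a ^ (E * k)) k)"
  have bA: "pov A0 b" unfolding b_def
    by (rule subr_sum[OF subr_pov[OF s0], simplified], rule pov_monom[OF s0])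
      (use cpA s0 aA in \<open>auto simp: pov_def subrD subr_power\<close>)
  have cb: "coeff b k = (if k \<le> d then coeff cp k * a ^ (E * k) else 0)" for k
    unfolding b_def by (simp add: coeff_sum coeff_monom)
  have "poly b \<alpha> = (\<Sum>k\<le>d. coeff cp k * a ^ (E * k) * \<alpha> ^ k)"
    unfolding b_def by (simp add: poly_sum poly_monom)
  also have "\<dots> = (\<Sum>k\<le>d. coeff cp k * t ^ k)"
    unfolding t_def by (intro sum.cong) (simp_all add: power_mult_distrib power_mult mult.assoc)
  also have "\<dots> = poly cp t" using cpd by (simp add: poly_altdef)
  finally have "poly b \<alpha> \<in> P1" using cpP by simp
  moreover have "\<not> pov P0 b"
  proof
    assume "pov P0 b"
    then have "a ^ (E * d) \<in> P0" using cb[of d] cpd unfolding pov_def by (metis le_refl mult_1)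
    moreover have "a ^ n \<notin> P0" for n
    proof (induction n)
      case 0 then show ?case using prime_idealD(2)[OF P0_prime] by simp
    next
      case (Suc n) then show ?case using prime_idealD(4)[OF P0_prime s0 aA subr_power[OF s0 aA] a_notP0] by simp
    qed
    ultimately show False by blast
  qed
  ultimately show ?thesis using bA by blast
qed

end



context step begin

lemma caseAlg:
  assumes alg: "alg_closed_field TYPE('k)"
    and IH: "\<And>\<alpha>0. \<alpha>0 \<in> A0 \<Longrightarrow> \<alpha>0 \<notin> P0 \<Longrightarrow> good A0 P0 \<alpha>0"
    and nT: "\<exists>p. pov A0 p \<and> poly p g \<in> P1 \<and> \<not> pov P0 p"
    and \<alpha>: "\<alpha> \<in> A1" "\<alpha> \<notin> P1"
  shows "good A1 P1 \<alpha>"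
proof -
  define S where "S = {p. pov A0 p \<and> poly p g \<in> P1 \<and> \<not> pov P0 p}"
  define d where "d = (LEAST n. \<exists>p\<in>S. degree p = n)"
  have ex: "\<exists>n. \<exists>p\<in>S. degree p = n" using nT unfolding S_def by blast
  obtain H where HS: "H \<in> S" "degree H = d" using LeastI_ex[OF ex] unfolding d_def by blast
  have Hmin: "pov P0 p" if "pov A0 p" "poly p g \<in> P1" "degree p < d" for p
  proof (rule ccontr)
    assume "\<not> pov P0 p"
    then have "p \<in> S" using that unfolding S_def by blast
    then have "d \<le> degree p" unfolding d_def by (auto intro: Least_le)
    then show False using that(3) by simp
  qed
  interpret A: alg_step A0 A1 g P1 phi H d
    by unfold_locales (use HS Hmin in \<open>auto simp: S_def\<close>)
  obtain b where b: "pov A0 b" "poly b \<alpha> \<in> P1" "\<not> pov P0 b" using A.ALG[OF \<alpha>(1)] by blast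
  obtain c u where cu: "c \<in> A0" "c \<notin> P0" "u \<in> A1" "c - \<alpha> * u \<in> P1"
    using MR[OF \<alpha> b] by blast
  have acA: "A.a * c \<in> A0" using A.aA cu(1) s0 by (simp add: subrD)
  have acP: "A.a * c \<notin> P0" using prime_idealD(4)[OF P0_prime s0 A.aA cu(1) A.a_notP0 cu(2)] .
  obtain \<chi>0 where \<chi>0: "hom_on A0 \<chi>0" "\<And>c. \<chi>0 (phi c) = c" "\<And>x. x \<in> P0 \<Longrightarrow> \<chi>0 x = 0" "\<chi>0 (A.a * c) \<noteq> 0"
    using IH[OF acA acP] unfolding good_def by blast
  have a0: "\<chi>0 A.a \<noteq> 0" and c0': "\<chi>0 c \<noteq> 0" using \<chi>0(4) hom_onD(4)[OF \<chi>0(1) s0 A.aA cu(1)] by auto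
  obtain c0 where c0: "poly (map_poly \<chi>0 H) c0 = 0" using A.root_exists[OF alg \<chi>0(1) a0] by blast
  have cond: "poly (map_poly \<chi>0 p) c0 = 0" if "pov A0 p" "poly p g \<in> P1" for p
    by (rule A.cond[OF \<chi>0(1) \<chi>0(3) a0 c0 that])
  obtain \<chi> where \<chi>: "hom_on A1 \<chi>" "\<forall>c. \<chi> (phi c) = c" "\<forall>x\<in>P1. \<chi> x = 0"
      "\<forall>p. pov A0 p \<longrightarrow> \<chi> (poly p g) = poly (map_poly \<chi>0 p) c0"
    using ext[OF \<chi>0(1,2) cond] by blast
  have "\<chi> (poly [:c:] g) = poly (map_poly \<chi>0 [:c:]) c0" using \<chi>(4) pov_const[OF s0 cu(1)] by blast
  then have "\<chi> c = \<chi>0 c" using map_poly_const_on[OF \<chi>0(1) s0, of c] by simp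
  then have "\<chi> c \<noteq> 0" using c0' by simp
  moreover have "\<chi> c = \<chi> \<alpha> * \<chi> u"
  proof -
    have cA1: "c \<in> A1" using cu(1) A01 by blast
    have auA: "\<alpha> * u \<in> A1" using \<alpha>(1) cu(3) s1 by (simp add: subrD)
    have dA: "c - \<alpha> * u \<in> A1" using cA1 auA s1 by (simp add: subrD)
    have "\<chi> c = \<chi> (\<alpha> * u + (c - \<alpha> * u))" by simp
    also have "\<dots> = \<chi> (\<alpha> * u) + \<chi> (c - \<alpha> * u)" by (rule hom_onD(3)[OF \<chi>(1) s1 auA dA])
    also have "\<chi> (c - \<alpha> * u) = 0" using \<chi>(3) cu(4) by blast
    also have "\<chi> (\<alpha> * u) = \<chi> \<alpha> * \<chi> u" by (rule hom_onD(4)[OF \<chi>(1) s1 \<alpha>(1) cu(3)])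
    finally show ?thesis by simp
  qed
  ultimately have "\<chi> \<alpha> \<noteq> 0" by auto
  then show ?thesis unfolding good_def using \<chi> by blast
qed

end

lemma subr_range_phi: "is_ring_hom phi \<Longrightarrow> subr (range phi)"
proof -
  assume phi: "is_ring_hom phi"
  have "1 \<in> range phi" using ring_homD(1)[OF phi] by (metis rangeI)
  moreover have "x + y \<in> range phi" "x * y \<in> range phi" if xyr: "x \<in> range phi" "y \<in> range phi" for x y
  proof -
    obtain c1 c2 where xy: "x = phi c1" "y = phi c2" using xyr by blast
    show "x + y \<in> range phi" "x * y \<in> range phi" unfolding xy ring_homD(3,4)[OF phi, symmetric] by simp_all
  qed
  moreover have "- x \<in> range phi" if xr: "x \<in> range phi" for x
  proof -
    obtain c where c: "x = phi c" using xr by blast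
    have "- x = phi (- c)" unfolding c ring_homD(5)[OF phi] ..
    then show ?thesis by simp
  qed
  ultimately show ?thesis unfolding subr_def by blast
qed

theorem NS_main:
  fixes phi :: "'k::field \<Rightarrow> 'a::comm_ring_1"
  assumes alg: "alg_closed_field TYPE('k)" and phi: "is_ring_hom phi" and fin: "finite G"
  shows "\<forall>P \<alpha>. prime_ideal_in (gen_subring (range phi \<union> G)) P \<longrightarrow> \<alpha> \<in> gen_subring (range phi \<union> G) \<longrightarrow> \<alpha> \<notin> P \<longrightarrow>
    (\<exists>chi. hom_on (gen_subring (range phi \<union> G)) chi \<and> (\<forall>c. chi (phi c) = c) \<and> (\<forall>x\<in>P. chi x = 0) \<and> chi \<alpha> \<noteq> 0)"
  using fin
proof (induction G rule: finite_induct)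
  case empty
  have sr: "subr (range phi)" by (rule subr_range_phi[OF phi])
  have A: "gen_subring (range phi \<union> {}) = range phi"
    using gen_subring_least[OF sr, of "range phi"] gen_subring_base[of "range phi"] by auto
  show ?case unfolding A
  proof (intro allI impI)
    fix P \<alpha> assume P: "prime_ideal_in (range phi) P" and \<alpha>: "\<alpha> \<in> range phi" "\<alpha> \<notin> P"
    have Pi: "ideal_in (range phi) P" using prime_idealD(1)[OF P] .
    have one: "(1::'a) \<notin> P" using prime_idealD(2)[OF P] .
    have zero: "(0::'a) \<in> P" using ideal_inD(2)[OF Pi sr] .
    have unit: "phi c \<in> P \<Longrightarrow> c = 0" for c
    proof (rule ccontr)
      assume "phi c \<in> P" "c \<noteq> 0"
      then have "phi (inverse c) * phi c \<in> P" using ideal_inD(4)[OF Pi sr] by blast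
      then have "phi (inverse c * c) \<in> P" using ring_homD(4)[OF phi] by metis
      then show False using \<open>c \<noteq> 0\<close> one ring_homD(1)[OF phi] by simp
    qed
    have inj: "inj phi"
    proof (rule injI)
      fix x y assume "phi x = phi y"
      then have "phi (x - y) = 0" using ring_homD(6)[OF phi] by simp
      then have "x - y = 0" using unit zero by metis
      then show "x = y" by simp
    qed
    define chi where "chi x = inv_into UNIV phi x" for x
    have chiphi: "chi (phi c) = c" for c unfolding chi_def using inj by (simp add: inv_into_f_f)
    have "hom_on (range phi) chi"
      unfolding hom_on_def
    proof (intro conjI ballI)
      show "chi 1 = 1" using chiphi[of 1] ring_homD(1)[OF phi] by simp
    next
      fix x y assume "x \<in> range phi" "y \<in> range phi"
      then obtain c1 c2 where xy: "x = phi c1" "y = phi c2" by blast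
      have "x + y = phi (c1 + c2)" "x * y = phi (c1 * c2)" unfolding xy ring_homD(3,4)[OF phi] by simp_all
      then show "chi (x + y) = chi x + chi y" "chi (x * y) = chi x * chi y"
        unfolding xy by (simp_all only: chiphi)
    qed
    moreover have "\<forall>x\<in>P. chi x = 0"
    proof
      fix x assume "x \<in> P"
      moreover then obtain c where "x = phi c" using ideal_inD(1)[OF Pi sr] by blast
      ultimately show "chi x = 0" using unit chiphi by auto
    qed
    moreover have "chi \<alpha> \<noteq> 0"
    proof -
      obtain c where c: "\<alpha> = phi c" using \<alpha>(1) by blast
      then have "c \<noteq> 0" using \<alpha>(2) zero ring_homD(2)[OF phi] by auto
      then show ?thesis using c chiphi by simp
    qed
    ultimately show "\<exists>chi. hom_on (range phi) chi \<and> (\<forall>c. chi (phi c) = c) \<and> (\<forall>x\<in>P. chi x = 0) \<and> chi \<alpha> \<noteq> 0"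
      using chiphi by blast
  qed
next
  case (insert g G)
  let ?A0 = "gen_subring (range phi \<union> G)"
  let ?A1 = "gen_subring (range phi \<union> insert g G)"
  have s0: "subr ?A0" by (rule subr_gen_subring)
  have eq: "range phi \<union> insert g G = insert g (range phi \<union> G)" by simp
  have A1: "?A1 = {poly p g | p. pov ?A0 p}"
    unfolding eq by (rule gen_insert[OF s0 refl])
  show ?case
  proof (intro allI impI)
    fix P1 \<alpha> assume P1: "prime_ideal_in ?A1 P1" and \<alpha>: "\<alpha> \<in> ?A1" "\<alpha> \<notin> P1"
    have phiA0: "range phi \<subseteq> ?A0" using gen_subring_base[of "range phi \<union> G"] by (rule subset_trans[rotated]) simp
    interpret S: step ?A0 ?A1 g P1 phi
      by (rule step.intro[OF s0 subr_gen_subring A1 P1 phiA0 phi])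
    have IH: "S.good ?A0 S.P0 \<alpha>0" if "\<alpha>0 \<in> ?A0" "\<alpha>0 \<notin> S.P0" for \<alpha>0
    proof -
      have "\<exists>chi. hom_on ?A0 chi \<and> (\<forall>c. chi (phi c) = c) \<and> (\<forall>x\<in>S.P0. chi x = 0) \<and> chi \<alpha>0 \<noteq> 0"
        by (rule insert.IH[rule_format, OF S.P0_prime that])
      then show ?thesis unfolding S.good_def .
    qed
    have "S.good ?A1 P1 \<alpha>"
    proof (cases "\<exists>p. pov ?A0 p \<and> poly p g \<in> P1 \<and> \<not> pov S.P0 p")
      case True
      show ?thesis by (rule S.caseAlg[OF alg IH True \<alpha>])
    next
      case False
      then have T: "pov ?A0 p \<Longrightarrow> poly p g \<in> P1 \<Longrightarrow> pov S.P0 p" for p by blast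
      show ?thesis by (rule S.caseT[OF IH T alg_closed_infinite[OF alg] \<alpha>])
    qed
    then show "\<exists>chi. hom_on ?A1 chi \<and> (\<forall>c. chi (phi c) = c) \<and> (\<forall>x\<in>P1. chi x = 0) \<and> chi \<alpha> \<noteq> 0"
      unfolding S.good_def .
  qed
qed



lemma NS:
  fixes phi :: "'k::field \<Rightarrow> 'a::comm_ring_1"
  assumes "alg_closed_field TYPE('k)" "is_ring_hom phi" "finite G"
    "prime_ideal_in (gen_subring (range phi \<union> G)) P" "\<alpha> \<in> gen_subring (range phi \<union> G)" "\<alpha> \<notin> P"
  shows "\<exists>\<chi>. hom_on (gen_subring (range phi \<union> G)) \<chi> \<and> (\<forall>c. \<chi> (phi c) = c) \<and> (\<forall>x\<in>P. \<chi> x = 0) \<and> \<chi> \<alpha> \<noteq> 0"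
  using NS_main[OF assms(1-3)] assms(4-6) by blast

lemma gen_subring_hom:
  assumes "is_ring_hom h" "x \<in> gen_subring X"
  shows "h x \<in> gen_subring (h ` X)"
  using assms(2)
proof (induction rule: gen_subring.induct)
  case (base x) then show ?case by (auto intro: gen_subring.base)
next
  case one then show ?case using ring_homD(1)[OF assms(1)] by (auto intro: gen_subring.one)
next
  case (add x y) then show ?case using ring_homD(3)[OF assms(1)] by (auto intro: gen_subring.add)
next
  case (neg x) then show ?case using ring_homD(5)[OF assms(1)] by (auto intro: gen_subring.neg)
next
  case (mult x y) then show ?case using ring_homD(4)[OF assms(1)] by (auto intro: gen_subring.mult)
qed

lemma single0_hom: "is_ring_hom (Poly_Mapping.single 0 :: 'a::comm_ring_1 \<Rightarrow> (nat \<Rightarrow>\<^sub>0 nat) \<Rightarrow>\<^sub>0 'a)"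
  unfolding is_ring_hom_def by (simp add: single_add mult_single)

lemma lookup_mult_single0: "Poly_Mapping.lookup (p * Poly_Mapping.single 0 c) \<mu> = Poly_Mapping.lookup p \<mu> * c"
  for p :: "(nat \<Rightarrow>\<^sub>0 nat) \<Rightarrow>\<^sub>0 'a::comm_ring_1"
proof -
  have "p * Poly_Mapping.single 0 c = Poly_Mapping.single 0 c * p"
    by (rule mult.commute)
  also have "\<dots> = Poly_Mapping.map ((*) c) p"
    by (rule mult_map_scale_conv_mult[symmetric])
  finally have "Poly_Mapping.lookup (p * Poly_Mapping.single 0 c) \<mu> = (c * Poly_Mapping.lookup p \<mu> when Poly_Mapping.lookup p \<mu> \<noteq> 0)"
    by (simp only: map.rep_eq)
  also have "\<dots> = Poly_Mapping.lookup p \<mu> * c" by (simp add: when_def mult.commute)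
  finally show ?thesis .
qed

lemma keys_map_sub: "Poly_Mapping.keys (Poly_Mapping.map f p) \<subseteq> Poly_Mapping.keys p"
  by (auto simp: in_keys_iff map.rep_eq when_def)

lemma map_polys_in: "p \<in> polys_in n \<Longrightarrow> Poly_Mapping.map f p \<in> polys_in n"
  using keys_map_sub[of f p] unfolding polys_in_def by blast

lemma polys_in_gen:
  fixes phi :: "'k::field \<Rightarrow> 'r::comm_ring_1"
  assumes phi: "is_ring_hom phi" and G: "gen_subring (range phi \<union> G) = UNIV"
  shows "(polys_in n :: ((nat \<Rightarrow>\<^sub>0 nat) \<Rightarrow>\<^sub>0 'r) set) =
     gen_subring (range (Poly_Mapping.single 0 \<circ> phi) \<union> (Poly_Mapping.single 0 ` G \<union> Xv ` {..<n}))"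
    (is "?L = gen_subring ?X")
proof
  show "gen_subring ?X \<subseteq> ?L"
    by (rule gen_subring_least[OF subr_polys_in]) (auto simp: single0_in_polys_in Xv_in_polys_in Xv_in_polys_in[simplified])
  show "?L \<subseteq> gen_subring ?X"
  proof
    fix p :: "(nat \<Rightarrow>\<^sub>0 nat) \<Rightarrow>\<^sub>0 'r" assume p: "p \<in> ?L"
    have s: "subr (gen_subring ?X)" by (rule subr_gen_subring)
    have c: "Poly_Mapping.single 0 c \<in> gen_subring ?X" for c :: 'r
    proof -
      have "c \<in> gen_subring (range phi \<union> G)" using G by simp
      then have "(Poly_Mapping.single 0 c :: (nat \<Rightarrow>\<^sub>0 nat) \<Rightarrow>\<^sub>0 'r) \<in> gen_subring (Poly_Mapping.single 0 ` (range phi \<union> G))"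
        by (rule gen_subring_hom[OF single0_hom])
      moreover have "(Poly_Mapping.single 0 ` (range phi \<union> G) :: ((nat \<Rightarrow>\<^sub>0 nat) \<Rightarrow>\<^sub>0 'r) set) \<subseteq> ?X" by auto
      ultimately show ?thesis using gen_subring_mono by blast
    qed
    have x: "Xv i \<in> gen_subring ?X" if "i < n" for i
      using that by (auto intro: gen_subring.base)
    have "p = (\<Sum>\<mu>\<in>Poly_Mapping.keys p. Poly_Mapping.single 0 (Poly_Mapping.lookup p \<mu>) *
               (\<Prod>i\<in>Poly_Mapping.keys \<mu>. Xv i ^ Poly_Mapping.lookup \<mu> i))"
      by (subst poly_expand) (rule sum.cong[OF refl], rule single_mono)
    also have "\<dots> \<in> gen_subring ?X"
    proof (rule subr_sum[OF s])
      fix \<mu> assume mu: "\<mu> \<in> Poly_Mapping.keys p"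
      show "Poly_Mapping.single 0 (Poly_Mapping.lookup p \<mu>) * (\<Prod>i\<in>Poly_Mapping.keys \<mu>. Xv i ^ Poly_Mapping.lookup \<mu> i) \<in> gen_subring ?X"
      proof (rule subrD(4)[OF s c subr_prod[OF s]])
        fix i assume "i \<in> Poly_Mapping.keys \<mu>"
        then have "i < n" using p mu unfolding polys_in_def by auto
        then show "Xv i ^ Poly_Mapping.lookup \<mu> i \<in> gen_subring ?X" by (rule subr_power[OF s x])
      qed
    qed
    finally show "p \<in> gen_subring ?X" .
  qed
qed


lemma (in freemod) decomp:
  fixes a :: "(nat \<Rightarrow>\<^sub>0 nat) \<Rightarrow>\<^sub>0 's"
  assumes "a \<in> polys_in n"
  shows "\<exists>F qa. finite F \<and> F \<subseteq> Bs \<and> (\<forall>\<beta>. qa \<beta> \<in> polys_in n) \<and>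
            a = (\<Sum>\<beta>\<in>F. Poly_Mapping.map f (qa \<beta>) * Poly_Mapping.single 0 \<beta>)"
proof -
  define qa where "qa \<beta> = (\<Sum>\<mu>\<in>Poly_Mapping.keys a. Poly_Mapping.single \<mu> (crd (Poly_Mapping.lookup a \<mu>) \<beta>))" for \<beta>
  define F where "F = (\<Union>\<mu>\<in>Poly_Mapping.keys a. {\<beta>. crd (Poly_Mapping.lookup a \<mu>) \<beta> \<noteq> 0})"
  have F: "finite F" unfolding F_def using crd_fin by auto
  have FB: "F \<subseteq> Bs" unfolding F_def using crd_Bs by blast
  have lq: "Poly_Mapping.lookup (qa \<beta>) \<mu> = (if \<mu> \<in> Poly_Mapping.keys a then crd (Poly_Mapping.lookup a \<mu>) \<beta> else 0)" for \<beta> \<mu>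
    unfolding qa_def by (simp add: lookup_sum lookup_single when_def)
  have kq: "Poly_Mapping.keys (qa \<beta>) \<subseteq> Poly_Mapping.keys a" for \<beta>
    using lq by (auto simp: in_keys_iff split: if_splits)
  have qp: "qa \<beta> \<in> polys_in n" for \<beta>
    using assms kq[of \<beta>] unfolding polys_in_def by blast
  have f0: "f 0 = 0" by (rule ring_homD(2)[OF hom])
  have lm: "Poly_Mapping.lookup (Poly_Mapping.map f p) \<mu> = f (Poly_Mapping.lookup p \<mu>)" for p :: "(nat \<Rightarrow>\<^sub>0 nat) \<Rightarrow>\<^sub>0 'r" and \<mu>
    using f0 by (auto simp: map.rep_eq when_def)
  have "a = (\<Sum>\<beta>\<in>F. Poly_Mapping.map f (qa \<beta>) * Poly_Mapping.single 0 \<beta>)"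
  proof (rule poly_mapping_eqI)
    fix \<mu>
    show "Poly_Mapping.lookup a \<mu> = Poly_Mapping.lookup (\<Sum>\<beta>\<in>F. Poly_Mapping.map f (qa \<beta>) * Poly_Mapping.single 0 \<beta>) \<mu>"
    proof (cases "\<mu> \<in> Poly_Mapping.keys a")
      case True
      have "Poly_Mapping.lookup (\<Sum>\<beta>\<in>F. Poly_Mapping.map f (qa \<beta>) * Poly_Mapping.single 0 \<beta>) \<mu>
            = (\<Sum>\<beta>\<in>F. f (crd (Poly_Mapping.lookup a \<mu>) \<beta>) * \<beta>)"
        using True by (simp add: lookup_sum lookup_mult_single0 lm lq)
      also have "\<dots> = Poly_Mapping.lookup a \<mu>"
        by (rule frep_value[OF hom crd_frep F, symmetric]) (use True in \<open>auto simp: F_def\<close>)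
      finally show ?thesis by simp
    next
      case False
      then show ?thesis by (simp add: lookup_sum lookup_mult_single0 lm lq f0 in_keys_iff)
    qed
  qed
  then show ?thesis using F FB qp by blast
qed

lemma E3:
  fixes \<chi> :: "((nat \<Rightarrow>\<^sub>0 nat) \<Rightarrow>\<^sub>0 'r::comm_ring_1) \<Rightarrow> 'k::field"
  assumes hom: "hom_on (polys_in n) \<chi>" and phi: "\<And>c. \<chi> (Poly_Mapping.single 0 (phi c)) = c"
    and q: "q \<in> polys_in n"
  shows "\<chi> (Poly_Mapping.single 0 (meval (\<lambda>i. phi (\<chi> (Xv i))) q)) = \<chi> q"
proof -
  let ?z = "\<lambda>i. phi (\<chi> (Xv i))"
  have s: "subr (polys_in n :: ((nat \<Rightarrow>\<^sub>0 nat) \<Rightarrow>\<^sub>0 'r) set)" by (rule subr_polys_in)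
  have kn: "\<And>\<mu> i. \<mu> \<in> Poly_Mapping.keys q \<Longrightarrow> i \<in> Poly_Mapping.keys \<mu> \<Longrightarrow> i < n"
    using q unfolding polys_in_def by auto
  have c: "(Poly_Mapping.single 0 c :: (nat \<Rightarrow>\<^sub>0 nat) \<Rightarrow>\<^sub>0 'r) \<in> polys_in n" for c
    by (rule single0_in_polys_in)
  have x: "(Xv i :: (nat \<Rightarrow>\<^sub>0 nat) \<Rightarrow>\<^sub>0 'r) \<in> polys_in n" if "i < n" for i
    using that by (rule Xv_in_polys_in)
  have "\<chi> q = \<chi> (\<Sum>\<mu>\<in>Poly_Mapping.keys q. Poly_Mapping.single 0 (Poly_Mapping.lookup q \<mu>) *
               (\<Prod>i\<in>Poly_Mapping.keys \<mu>. Xv i ^ Poly_Mapping.lookup \<mu> i))"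
    by (subst poly_expand) (rule arg_cong[where f = \<chi>], rule sum.cong[OF refl], rule single_mono)
  also have "\<dots> = (\<Sum>\<mu>\<in>Poly_Mapping.keys q. \<chi> (Poly_Mapping.single 0 (Poly_Mapping.lookup q \<mu>)) *
               (\<Prod>i\<in>Poly_Mapping.keys \<mu>. \<chi> (Xv i) ^ Poly_Mapping.lookup \<mu> i))"
  proof -
    have T: "(\<Prod>i\<in>Poly_Mapping.keys \<mu>. Xv i ^ Poly_Mapping.lookup \<mu> i :: (nat \<Rightarrow>\<^sub>0 nat) \<Rightarrow>\<^sub>0 'r) \<in> polys_in n" if "\<mu> \<in> Poly_Mapping.keys q" for \<mu>
      by (rule subr_prod[OF s], rule subr_power[OF s], rule x, rule kn[OF that])
    have "\<chi> (\<Sum>\<mu>\<in>Poly_Mapping.keys q. Poly_Mapping.single 0 (Poly_Mapping.lookup q \<mu>) *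
               (\<Prod>i\<in>Poly_Mapping.keys \<mu>. Xv i ^ Poly_Mapping.lookup \<mu> i)) =
          (\<Sum>\<mu>\<in>Poly_Mapping.keys q. \<chi> (Poly_Mapping.single 0 (Poly_Mapping.lookup q \<mu>) *
               (\<Prod>i\<in>Poly_Mapping.keys \<mu>. Xv i ^ Poly_Mapping.lookup \<mu> i)))"
      by (rule hom_on_sum[OF hom s], rule subrD(4)[OF s c T])
    also have "\<dots> = (\<Sum>\<mu>\<in>Poly_Mapping.keys q. \<chi> (Poly_Mapping.single 0 (Poly_Mapping.lookup q \<mu>)) *
               (\<Prod>i\<in>Poly_Mapping.keys \<mu>. \<chi> (Xv i) ^ Poly_Mapping.lookup \<mu> i))"
    proof (rule sum.cong[OF refl])
      fix \<mu> assume mu: "\<mu> \<in> Poly_Mapping.keys q"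
      have "\<chi> (Poly_Mapping.single 0 (Poly_Mapping.lookup q \<mu>) * (\<Prod>i\<in>Poly_Mapping.keys \<mu>. Xv i ^ Poly_Mapping.lookup \<mu> i))
          = \<chi> (Poly_Mapping.single 0 (Poly_Mapping.lookup q \<mu>)) * \<chi> (\<Prod>i\<in>Poly_Mapping.keys \<mu>. Xv i ^ Poly_Mapping.lookup \<mu> i)"
        by (rule hom_onD(4)[OF hom s c T[OF mu]])
      also have "\<chi> (\<Prod>i\<in>Poly_Mapping.keys \<mu>. Xv i ^ Poly_Mapping.lookup \<mu> i) = (\<Prod>i\<in>Poly_Mapping.keys \<mu>. \<chi> (Xv i ^ Poly_Mapping.lookup \<mu> i))"
        by (rule hom_on_prod[OF hom s], rule subr_power[OF s], rule x, rule kn[OF mu])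
      also have "\<dots> = (\<Prod>i\<in>Poly_Mapping.keys \<mu>. \<chi> (Xv i) ^ Poly_Mapping.lookup \<mu> i)"
        by (rule prod.cong[OF refl], rule hom_on_power[OF hom s], rule x, rule kn[OF mu])
      finally show "\<chi> (Poly_Mapping.single 0 (Poly_Mapping.lookup q \<mu>) * (\<Prod>i\<in>Poly_Mapping.keys \<mu>. Xv i ^ Poly_Mapping.lookup \<mu> i))
          = \<chi> (Poly_Mapping.single 0 (Poly_Mapping.lookup q \<mu>)) * (\<Prod>i\<in>Poly_Mapping.keys \<mu>. \<chi> (Xv i) ^ Poly_Mapping.lookup \<mu> i)" .
    qed
    finally show ?thesis .
  qed
  also have "\<dots> = \<chi> (\<Sum>\<mu>\<in>Poly_Mapping.keys q. Poly_Mapping.single 0 (Poly_Mapping.lookup q \<mu>) *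
               (\<Prod>i\<in>Poly_Mapping.keys \<mu>. Poly_Mapping.single 0 (?z i) ^ Poly_Mapping.lookup \<mu> i))"
    by (simp add: hom_on_sum[OF hom s] hom_onD(4)[OF hom s] hom_on_prod[OF hom s] hom_on_power[OF hom s]
        subrD(4)[OF s] subr_prod[OF s] subr_power[OF s] c phi)
  also have "(\<Sum>\<mu>\<in>Poly_Mapping.keys q. Poly_Mapping.single 0 (Poly_Mapping.lookup q \<mu>) *
               (\<Prod>i\<in>Poly_Mapping.keys \<mu>. Poly_Mapping.single 0 (?z i) ^ Poly_Mapping.lookup \<mu> i))
     = (Poly_Mapping.single 0 (meval ?z q) :: (nat \<Rightarrow>\<^sub>0 nat) \<Rightarrow>\<^sub>0 'r)"
    unfolding meval_def mmono_def by (simp add: ring_homD[OF single0_hom])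
  finally show ?thesis by simp
qed


lemma maxl:
  fixes \<chi> :: "((nat \<Rightarrow>\<^sub>0 nat) \<Rightarrow>\<^sub>0 'r::comm_ring_1) \<Rightarrow> 'k::field"
  assumes hom: "hom_on (polys_in n) \<chi>" and phic: "\<And>c. \<chi> (Poly_Mapping.single 0 (phi c)) = c"
    and phi: "is_ring_hom phi"
  shows "maximal_ideal_in UNIV {r. \<chi> (Poly_Mapping.single 0 r) = 0}"
proof -
  define \<psi> where "\<psi> r = \<chi> (Poly_Mapping.single 0 r)" for r
  have s: "subr (polys_in n :: ((nat \<Rightarrow>\<^sub>0 nat) \<Rightarrow>\<^sub>0 'r) set)" by (rule subr_polys_in)
  have c: "(Poly_Mapping.single 0 c :: (nat \<Rightarrow>\<^sub>0 nat) \<Rightarrow>\<^sub>0 'r) \<in> polys_in n" for c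
    by (rule single0_in_polys_in)
  have ps: "\<psi> (x + y) = \<psi> x + \<psi> y" "\<psi> (x * y) = \<psi> x * \<psi> y" "\<psi> 0 = 0" "\<psi> 1 = 1" "\<psi> (x - y) = \<psi> x - \<psi> y" for x y
  proof -
    have e: "Poly_Mapping.single 0 (x * y) = (Poly_Mapping.single 0 x * Poly_Mapping.single 0 y :: (nat \<Rightarrow>\<^sub>0 nat) \<Rightarrow>\<^sub>0 'r)"
      by (simp add: mult_single)
    show "\<psi> (x + y) = \<psi> x + \<psi> y" "\<psi> 0 = 0" "\<psi> 1 = 1" "\<psi> (x - y) = \<psi> x - \<psi> y"
      unfolding \<psi>_def using hom_onD[OF hom s] c by (simp_all add: single_add single_diff)
    show "\<psi> (x * y) = \<psi> x * \<psi> y" unfolding \<psi>_def e by (rule hom_onD(4)[OF hom s c c])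
  qed
  let ?m = "{r. \<chi> (Poly_Mapping.single 0 r) = 0}"
  have m: "?m = {r. \<psi> r = 0}" unfolding \<psi>_def by simp
  have idl: "ideal_in UNIV ?m" unfolding m ideal_in_def using ps by auto
  have ne: "?m \<noteq> UNIV" using ps(4) unfolding m by (metis (mono_tags) mem_Collect_eq UNIV_I zero_neq_one)
  have "J = ?m \<or> J = UNIV" if J: "ideal_in UNIV J" "?m \<subseteq> J" for J
  proof (rule disjCI)
    assume "J \<noteq> UNIV"
    show "J = ?m"
    proof (rule ccontr)
      assume "J \<noteq> ?m"
      then obtain x where x: "x \<in> J" "x \<notin> ?m" using J by blast
      define c where "c = \<psi> x"
      have c0: "c \<noteq> 0" using x m c_def by auto
      have "\<psi> (x - phi c) = 0" using ps(5) phic c_def unfolding \<psi>_def by simp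
      then have "x - phi c \<in> J" using J m by auto
      moreover have sU: "subr (UNIV :: 'r set)" unfolding subr_def by auto
      ultimately have "x - (x - phi c) \<in> J" using ideal_inD(7)[OF J(1) sU x(1)] by blast
      then have pc: "phi c \<in> J" by simp
      have "phi (inverse c) * phi c \<in> J" using J(1) pc unfolding ideal_in_def by blast
      then have "1 \<in> J" using c0 ring_homD(1,4)[OF phi] by (metis field_class.field_inverse)
      then have "a * 1 \<in> J" for a using J(1) unfolding ideal_in_def by blast
      then show False using \<open>J \<noteq> UNIV\<close> by auto
    qed
  qed
  then show ?thesis unfolding maximal_ideal_in_def using idl ne by blast
qed


lemma (in freemod) meval_decomp:
  fixes a :: "(nat \<Rightarrow>\<^sub>0 nat) \<Rightarrow>\<^sub>0 's"
  assumes "a = (\<Sum>\<beta>\<in>F. Poly_Mapping.map f (qa \<beta>) * Poly_Mapping.single 0 \<beta>)"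
  shows "meval (f \<circ> z) a = (\<Sum>\<beta>\<in>F. f (meval z (qa \<beta>)) * \<beta>)"
  unfolding assms by (simp add: meval_sum meval_mult meval_map[OF hom] meval_single)

theorem main_n:
  fixes phi :: "'k::field \<Rightarrow> 'r::comm_ring_1"
    and f :: "'r \<Rightarrow> 's::comm_ring_1"
  assumes alg: "alg_closed_field TYPE('k)"
    and phi: "is_ring_hom phi"
    and fg: "finitely_generated_algebra phi"
    and f: "is_ring_hom f"
    and free: "free_module_via f"
    and dom: "\<And>m. maximal_ideal_in (UNIV::'r set) m \<Longrightarrow> quotient_is_domain (UNIV::'s set) (ideal_gen_in UNIV (f ` m))"
  shows "prime_extension_property (polys_in n) (polys_in n) (Poly_Mapping.map f)"
proof -
  obtain G where G: "finite G" "gen_subring (range phi \<union> G) = UNIV"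
    using fg unfolding finitely_generated_algebra_def by blast
  obtain Bs where Bs: "\<And>s. \<exists>!c. frep f Bs c s"
    using free unfolding free_module_via_def frep_def by blast
  interpret freemod f Bs by (unfold_locales) (use f Bs in auto)
  let ?A = "polys_in n :: ((nat \<Rightarrow>\<^sub>0 nat) \<Rightarrow>\<^sub>0 'r) set"
  let ?B = "polys_in n :: ((nat \<Rightarrow>\<^sub>0 nat) \<Rightarrow>\<^sub>0 's) set"
  have sA: "subr ?A" by (rule subr_polys_in)
  have sB: "subr ?B" by (rule subr_polys_in)
  let ?phi' = "Poly_Mapping.single 0 \<circ> phi :: 'k \<Rightarrow> (nat \<Rightarrow>\<^sub>0 nat) \<Rightarrow>\<^sub>0 'r"
  let ?G' = "Poly_Mapping.single 0 ` G \<union> Xv ` {..<n} :: ((nat \<Rightarrow>\<^sub>0 nat) \<Rightarrow>\<^sub>0 'r) set"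
  have Aeq: "?A = gen_subring (range ?phi' \<union> ?G')" by (rule polys_in_gen[OF phi G(2)])
  have phi': "is_ring_hom ?phi'"
    using phi single0_hom unfolding is_ring_hom_def by auto
  have G': "finite ?G'" using G(1) by simp
  show ?thesis unfolding prime_extension_property_def
  proof (intro allI impI)
    fix P assume P: "prime_ideal_in ?A P"
    let ?Q = "ideal_gen_in ?B (Poly_Mapping.map f ` P)"
    have PA: "P \<subseteq> ?A" using P unfolding prime_ideal_in_def ideal_in_def by auto
    have sub: "Poly_Mapping.map f ` P \<subseteq> ?B" using PA map_polys_in by blast
    have Qi: "ideal_in ?B ?Q" by (rule ideal_gen_ideal[OF sB sub])
    have mapQ: "Poly_Mapping.map f p \<in> ?Q" if "p \<in> P" for p
      using ideal_gen_base[OF sub] that by blast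
    have inQ: "a \<in> ?Q" if dec: "a = (\<Sum>\<beta>\<in>F. Poly_Mapping.map f (qa \<beta>) * Poly_Mapping.single 0 \<beta>)"
      and allP: "\<forall>\<beta>\<in>F. qa \<beta> \<in> P" for a F qa
      unfolding dec
      by (rule ideal_in_sum[OF Qi sB], rule ideal_inD(5)[OF Qi sB single0_in_polys_in mapQ]) (use allP in auto)
    have mult: "a \<in> ?Q \<or> b \<in> ?Q" if ab: "a \<in> ?B" "b \<in> ?B" "a * b \<in> ?Q" for a b
    proof (rule ccontr)
      assume nab: "\<not> (a \<in> ?Q \<or> b \<in> ?Q)"
      obtain Fa qa where Fa: "finite Fa" "Fa \<subseteq> Bs" "\<forall>\<beta>. qa \<beta> \<in> ?A"
        "a = (\<Sum>\<beta>\<in>Fa. Poly_Mapping.map f (qa \<beta>) * Poly_Mapping.single 0 \<beta>)"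
        using decomp[OF ab(1)] by blast
      obtain Fb qb where Fb: "finite Fb" "Fb \<subseteq> Bs" "\<forall>\<beta>. qb \<beta> \<in> ?A"
        "b = (\<Sum>\<beta>\<in>Fb. Poly_Mapping.map f (qb \<beta>) * Poly_Mapping.single 0 \<beta>)"
        using decomp[OF ab(2)] by blast
      obtain \<beta>1 where b1: "\<beta>1 \<in> Fa" "qa \<beta>1 \<notin> P" using inQ[OF Fa(4)] nab by blast
      obtain \<beta>2 where b2: "\<beta>2 \<in> Fb" "qb \<beta>2 \<notin> P" using inQ[OF Fb(4)] nab by blast
      define \<alpha> where "\<alpha> = qa \<beta>1 * qb \<beta>2"
      have \<alpha>A: "\<alpha> \<in> ?A" unfolding \<alpha>_def using Fa(3) Fb(3) sA by (simp add: subrD)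
      have \<alpha>P: "\<alpha> \<notin> P" unfolding \<alpha>_def using prime_idealD(4)[OF P sA] Fa(3) Fb(3) b1 b2 by blast
      obtain \<chi> where \<chi>: "hom_on ?A \<chi>" "\<And>c. \<chi> (?phi' c) = c" "\<And>x. x \<in> P \<Longrightarrow> \<chi> x = 0" "\<chi> \<alpha> \<noteq> 0"
        using NS[OF alg phi' G', of P \<alpha>] P \<alpha>A \<alpha>P unfolding Aeq[symmetric] by auto
      have \<chi>c: "\<chi> (Poly_Mapping.single 0 (phi c)) = c" for c using \<chi>(2)[of c] by simp
      define z where "z i = phi (\<chi> (Xv i))" for i
      define m where "m = {r. \<chi> (Poly_Mapping.single 0 r) = 0}"
      have mm: "maximal_ideal_in UNIV m" unfolding m_def by (rule maxl[OF \<chi>(1) \<chi>c phi])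
      then have mi: "ideal_in UNIV m" unfolding maximal_ideal_in_def by auto
      define mS where "mS = ideal_gen_in UNIV (f ` m)"
      have sU: "subr (UNIV :: 's set)" unfolding subr_def by auto
      have mSi: "ideal_in UNIV mS" unfolding mS_def by (rule ideal_gen_ideal[OF sU]) simp
      have E: "\<chi> (Poly_Mapping.single 0 (meval z q)) = \<chi> q" if "q \<in> ?A" for q
        unfolding z_def by (rule E3[OF \<chi>(1) \<chi>c that])
      have Pm: "meval z p \<in> m" if "p \<in> P" for p
        using E[of p] PA that \<chi>(3) unfolding m_def by auto
      define Q' where "Q' = {y \<in> ?B. meval (f \<circ> z) y \<in> mS}"
      have Q'i: "ideal_in ?B Q'"
        unfolding ideal_in_def Q'_def
        using ideal_inD[OF mSi sU] sB by (auto simp: meval_add meval_mult subrD)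
      have "Poly_Mapping.map f ` P \<subseteq> Q'"
      proof
        fix y assume "y \<in> Poly_Mapping.map f ` P"
        then obtain p where p: "p \<in> P" "y = Poly_Mapping.map f p" by auto
        have "meval (f \<circ> z) y = f (meval z p)" using p meval_map[OF f] by simp
        also have "\<dots> \<in> mS" unfolding mS_def using ideal_gen_base[of "f ` m" UNIV] Pm[OF p(1)] by blast
        finally show "y \<in> Q'" unfolding Q'_def using p sub by auto
      qed
      then have QQ': "?Q \<subseteq> Q'" by (rule ideal_gen_least[OF Q'i])
      have "meval (f \<circ> z) a * meval (f \<circ> z) b \<in> mS"
        using QQ' ab(3) unfolding Q'_def by (auto simp: meval_mult)
      moreover have "quotient_is_domain UNIV mS" unfolding mS_def by (rule dom[OF mm])
      ultimately have "meval (f \<circ> z) a \<in> mS \<or> meval (f \<circ> z) b \<in> mS"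
        unfolding quotient_is_domain_def by blast
      moreover have kill: "\<chi> (q \<beta>) = 0" if "meval (f \<circ> z) x \<in> mS" "finite F" "F \<subseteq> Bs" "\<forall>\<beta>. q \<beta> \<in> ?A"
         "x = (\<Sum>\<beta>\<in>F. Poly_Mapping.map f (q \<beta>) * Poly_Mapping.single 0 \<beta>)" "\<beta> \<in> F" for x F q \<beta>
      proof -
        have "meval (f \<circ> z) x = (\<Sum>\<beta>\<in>F. f (meval z (q \<beta>)) * \<beta>)" by (rule meval_decomp[OF that(5)])
        then have "crd (meval (f \<circ> z) x) \<beta> = meval z (q \<beta>)"
          using crd_combination[OF that(2,3,6)] by simp
        moreover have "crd (meval (f \<circ> z) x) \<beta> \<in> m"
          by (rule crd_ideal[OF mi]) (use that(1) in \<open>simp add: mS_def\<close>)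
        ultimately have "meval z (q \<beta>) \<in> m" by simp
        then show ?thesis using E[of "q \<beta>"] that(4) unfolding m_def by simp
      qed
      ultimately have "\<chi> (qa \<beta>1) = 0 \<or> \<chi> (qb \<beta>2) = 0"
        using Fa Fb b1 b2 by blast
      moreover have "\<chi> \<alpha> = \<chi> (qa \<beta>1) * \<chi> (qb \<beta>2)"
        unfolding \<alpha>_def by (rule hom_onD(4)[OF \<chi>(1) sA]) (use Fa(3) Fb(3) in auto)
      ultimately show False using \<chi>(4) by auto
    qed
    show "prime_ideal_in ?B ?Q \<or> ?Q = ?B"
    proof (cases "?Q = ?B")
      case False
      then have "prime_ideal_in ?B ?Q" unfolding prime_ideal_in_def using Qi mult by blast
      then show ?thesis by simp
    qed simp
  qed
qed


theorem corollary5p11: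
  fixes phi :: "'k::field \<Rightarrow> 'r::comm_ring_1"
    and f :: "'r \<Rightarrow> 's::comm_ring_1"
  assumes "alg_closed_field TYPE('k)"
    and "is_ring_hom phi"
    and "finitely_generated_algebra phi"
    and "is_ring_hom f"
    and "(1::'s) \<noteq> 0"
    and "free_module_via f"
    and "\<And>m. maximal_ideal_in (UNIV::'r set) m \<Longrightarrow> quotient_is_domain (UNIV::'s set) (ideal_gen_in UNIV (f ` m))"
  shows "stable_prime_extension_property f"
  unfolding stable_prime_extension_property_def
  using main_n[OF assms(1-4) assms(6) assms(7)] by blast

end
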